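(* Let $f:[0,1]\to(0,1)$ be a $C^3$ function whose fixed points are isolated. For any initial environment $w_0\in([0,1]\times(0,+\infty))^{\mathbb{Z}}$ and any integer $k\ge0$, $\mathbb{P}_{0,w_0}[X_n\to+\infty]>0$ if and only if $\mathbb{P}_{k,w_0}[X_n>k\ \text{for all } n>0]>0$.
   Context: Generalized reinforced random walk started at $(k,w_0)$, $w_0=(\alpha_0^x,l_0^x)_{x\in\mathbb{Z}}$, associated to $f$ (law $\mathbb{P}_{k,w_0}$): $X_0=k$; for $x\in\mathbb{Z}$, $n\ge0$ let $L_n^x=\sum_{j=0}^{n-1}1_{\{X_j=x\}}$ and $\tilde\alpha_n^x=\frac{1}{l_0^x+L_n^x}\big(\alpha_0^xl_0^x+\sum_{j=0}^{n-1}1_{\{X_j=x,X_{j+1}=x+1\}}\big)$; given the past, if $X_n=x$ then $X_{n+1}=x+1$ with probability $f(\tilde\alpha_n^x)$ and $X_{n+1}=x-1$ otherwise. *)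

theory Defs
  imports "HOL-Probability.Probability"
begin

text \<open>An environment assigns to each site x the pair (alpha_0^x, l_0^x).\<close>
type_synonym env = "int \<Rightarrow> real \<times> real"

definition valid_env :: "env \<Rightarrow> bool" where
  "valid_env w \<longleftrightarrow> (\<forall>x. 0 \<le> fst (w x) \<and> fst (w x) \<le> 1 \<and> 0 < snd (w x))"

text \<open>Given the path prefix xs = [X_0, ..., X_n] (nonempty), the local time
  L_n^x and the number of right jumps from x before time n.\<close>
definition loc_time :: "int list \<Rightarrow> int \<Rightarrow> nat" where
  "loc_time xs x = card {j. j < length xs - 1 \<and> xs ! j = x}"

definition right_jumps :: "int list \<Rightarrow> int \<Rightarrow> nat" where
  "right_jumps xs x = card {j. j < length xs - 1 \<and> xs ! j = x \<and> xs ! (j+1) = x + 1}"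

definition alpha_tilde :: "env \<Rightarrow> int list \<Rightarrow> int \<Rightarrow> real" where
  "alpha_tilde w xs x =
     (fst (w x) * snd (w x) + real (right_jumps xs x)) / (snd (w x) + real (loc_time xs x))"

definition step_prob :: "(real \<Rightarrow> real) \<Rightarrow> env \<Rightarrow> int list \<Rightarrow> int \<Rightarrow> real" where
  "step_prob f w xs y =
     (let x = last xs in
      if y = x + 1 then f (alpha_tilde w xs x)
      else if y = x - 1 then 1 - f (alpha_tilde w xs x)
      else 0)"

definition path_prob :: "(real \<Rightarrow> real) \<Rightarrow> env \<Rightarrow> int \<Rightarrow> int list \<Rightarrow> real" where
  "path_prob f w k xs =
     (if hd xs = k then 1 else 0) *
     (\<Prod>j\<in>{0..<length xs - 1}. step_prob f w (take (j+1) xs) (xs ! (j+1)))"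

definition is_grrw ::
  "(real \<Rightarrow> real) \<Rightarrow> env \<Rightarrow> int \<Rightarrow> 'a measure \<Rightarrow> (nat \<Rightarrow> 'a \<Rightarrow> int) \<Rightarrow> bool" where
  "is_grrw f w k M X \<longleftrightarrow>
     prob_space M \<and>
     (\<forall>n. X n \<in> measurable M (count_space UNIV)) \<and>
     (\<forall>xs. xs \<noteq> [] \<longrightarrow>
        measure M {\<omega> \<in> space M. \<forall>i<length xs. X i \<omega> = xs ! i} = path_prob f w k xs)"

definition C3_on_unit :: "(real \<Rightarrow> real) \<Rightarrow> bool" where
  "C3_on_unit f \<longleftrightarrow>
     (\<exists>D :: nat \<Rightarrow> real \<Rightarrow> real. D 0 = f \<and>
        (\<forall>i<3. \<forall>x\<in>{0..1}. (D i has_real_derivative D (Suc i) x) (at x within {0..1})) \<and>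
        continuous_on {0..1} (D 3))"

definition isolated_fixed_points :: "(real \<Rightarrow> real) \<Rightarrow> bool" where
  "isolated_fixed_points f \<longleftrightarrow>
     (\<forall>x\<in>{0..1}. f x = x \<longrightarrow>
        (\<exists>e>0. \<forall>y\<in>{0..1}. f y = y \<and> \<bar>y - x\<bar> < e \<longrightarrow> y = x))"

end

theory Submission
  imports Defs
begin


fun es :: "(int list \<Rightarrow> real) \<Rightarrow> nat \<Rightarrow> int list \<Rightarrow> real" where
  "es g 0 zs = g zs"
| "es g (Suc n) zs = es g n (zs @ [last zs + 1]) + es g n (zs @ [last zs - 1])"

definition ext :: "int list \<Rightarrow> nat \<Rightarrow> int list \<Rightarrow> bool" where
  "ext zs n ys \<longleftrightarrow> take (length zs) ys = zs \<and> length ys = length zs + n \<and>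
     (\<forall>i. length zs \<le> Suc i \<longrightarrow> Suc i < length ys \<longrightarrow> \<bar>ys ! Suc i - ys ! i\<bar> = 1)"

lemma ext_step:
  assumes "zs \<noteq> []" "ext (zs @ [y]) n ys" "\<bar>y - last zs\<bar> = 1"
  shows "ext zs (Suc n) ys"
proof -
  have t: "take (Suc (length zs)) ys = zs @ [y]" and l: "length ys = Suc (length zs) + n"
    using assms(2) unfolding ext_def by auto
  have "take (length zs) ys = take (length zs) (take (Suc (length zs)) ys)" by simp
  then have tz: "take (length zs) ys = zs" using t by simp
  have "ys ! length zs = take (Suc (length zs)) ys ! length zs" by simp
  then have yy: "ys ! length zs = y" using t by simp
  have "ys ! (length zs - 1) = take (length zs) ys ! (length zs - 1)"
    using assms(1) by simp
  then have yz: "ys ! (length zs - 1) = last zs" using tz assms(1) by (simp add: last_conv_nth)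
  show ?thesis unfolding ext_def
  proof (intro conjI allI impI)
    show "take (length zs) ys = zs" by fact
    show "length ys = length zs + Suc n" using l by simp
    fix i assume i: "length zs \<le> Suc i" "Suc i < length ys"
    show "\<bar>ys ! Suc i - ys ! i\<bar> = 1"
    proof (cases "Suc i = length zs")
      case True
      then have "i = length zs - 1" by simp
      then show ?thesis using True yy yz assms(3) by (simp add: abs_minus_commute)
    next
      case False
      then show ?thesis using assms(2) i unfolding ext_def by auto
    qed
  qed
qed

lemma es_mono:
  assumes "zs \<noteq> []" "\<And>ys. ext zs n ys \<Longrightarrow> g ys \<le> h ys"
  shows "es g n zs \<le> es h n zs"
  using assms
proof (induction n arbitrary: zs)
  case 0
  then show ?case by (simp add: ext_def)
next
  case (Suc n)
  have a: "es g n (zs @ [last zs + 1]) \<le> es h n (zs @ [last zs + 1])"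
    by (rule Suc.IH) (use Suc.prems ext_step in auto)
  have b: "es g n (zs @ [last zs - 1]) \<le> es h n (zs @ [last zs - 1])"
    by (rule Suc.IH) (use Suc.prems ext_step in auto)
  show ?case using a b by simp
qed

lemma es_cong:
  assumes "zs \<noteq> []" "\<And>ys. ext zs n ys \<Longrightarrow> g ys = h ys"
  shows "es g n zs = es h n zs"
  using es_mono[of zs n g h] es_mono[of zs n h g] assms by force

lemma es_add: "es (\<lambda>y. g y + h y) n zs = es g n zs + es h n zs"
  by (induction n arbitrary: zs) auto

lemma es_cmult: "es (\<lambda>y. c * g y) n zs = c * es g n zs"
  by (induction n arbitrary: zs) (auto simp: algebra_simps)

lemma es_nonneg: "(\<And>ys. 0 \<le> g ys) \<Longrightarrow> 0 \<le> es g n zs"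
  by (induction n arbitrary: zs) (auto intro: add_nonneg_nonneg)

lemma es_comp: "es g (m + n) zs = es (\<lambda>ws. es g n ws) m zs"
  by (induction m arbitrary: zs) auto

lemma es_append: "v \<noteq> [] \<Longrightarrow> es g n (s @ v) = es (\<lambda>zs. g (s @ zs)) n v"
  by (induction n arbitrary: v) auto

fun dn :: "int list \<Rightarrow> nat \<Rightarrow> int list" where
  "dn zs 0 = zs"
| "dn zs (Suc n) = dn (zs @ [last zs - 1]) n"

lemma es_ge_dn: "(\<And>ys. 0 \<le> g ys) \<Longrightarrow> g (dn zs n) \<le> es g n zs"
proof (induction n arbitrary: zs)
  case (Suc n)
  have "g (dn zs (Suc n)) \<le> es g n (zs @ [last zs - 1])" using Suc by simp
  moreover have "0 \<le> es g n (zs @ [last zs + 1])" using Suc.prems es_nonneg by blast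
  ultimately show ?case by simp
qed simp

lemma dn_props: "length (dn zs n) = length zs + n \<and> (zs \<noteq> [] \<longrightarrow> last (dn zs n) = last zs - int n)"
  by (induction n arbitrary: zs) auto


lemma loc_le_card: "right_jumps xs x \<le> loc_time xs x"
  unfolding right_jumps_def loc_time_def
  by (rule card_mono) auto

lemma alpha_range:
  assumes "valid_env w"
  shows "0 \<le> alpha_tilde w xs x \<and> alpha_tilde w xs x \<le> 1"
proof -
  have a: "0 \<le> fst (w x)" "fst (w x) \<le> 1" "0 < snd (w x)" using assms unfolding valid_env_def by auto
  have r: "real (right_jumps xs x) \<le> real (loc_time xs x)" using loc_le_card by simp
  have d: "0 < snd (w x) + real (loc_time xs x)" using a by simp
  have n0: "0 \<le> fst (w x) * snd (w x) + real (right_jumps xs x)" using a by simp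
  have n1: "fst (w x) * snd (w x) + real (right_jumps xs x) \<le> snd (w x) + real (loc_time xs x)"
  proof -
    have "fst (w x) * snd (w x) \<le> 1 * snd (w x)" by (rule mult_right_mono) (use a in auto)
    then show ?thesis using r by simp
  qed
  show ?thesis unfolding alpha_tilde_def using d n0 n1 by (simp add: divide_le_eq_1)
qed

lemma step_up: "step_prob f w xs (last xs + 1) = f (alpha_tilde w xs (last xs))"
  unfolding step_prob_def by (simp add: Let_def)
lemma step_dn: "step_prob f w xs (last xs - 1) = 1 - f (alpha_tilde w xs (last xs))"
  unfolding step_prob_def by (simp add: Let_def)
lemma step_other: "y \<noteq> last xs + 1 \<Longrightarrow> y \<noteq> last xs - 1 \<Longrightarrow> step_prob f w xs y = 0"
  unfolding step_prob_def by (simp add: Let_def)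

lemma pp_single: "path_prob f w k [x] = (if x = k then 1 else 0)"
  unfolding path_prob_def by simp

lemma pp_snoc:
  assumes "xs \<noteq> []"
  shows "path_prob f w k (xs @ [y]) = path_prob f w k xs * step_prob f w xs y"
proof -
  obtain n where n: "length xs = Suc n" using assms by (cases xs) auto
  have h: "hd (xs @ [y]) = hd xs" using assms by simp
  have "(\<Prod>j\<in>{0..<length (xs @ [y]) - 1}. step_prob f w (take (j+1) (xs @ [y])) ((xs @ [y]) ! (j+1)))
      = (\<Prod>j\<in>{0..<Suc n}. step_prob f w (take (j+1) (xs @ [y])) ((xs @ [y]) ! (j+1)))"
    using n by simp
  also have "\<dots> = (\<Prod>j\<in>{0..<n}. step_prob f w (take (j+1) (xs @ [y])) ((xs @ [y]) ! (j+1)))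
      * step_prob f w (take (n+1) (xs @ [y])) ((xs @ [y]) ! (n+1))"
    by simp
  also have "(\<Prod>j\<in>{0..<n}. step_prob f w (take (j+1) (xs @ [y])) ((xs @ [y]) ! (j+1)))
      = (\<Prod>j\<in>{0..<n}. step_prob f w (take (j+1) xs) (xs ! (j+1)))"
    by (rule prod.cong) (use n in \<open>auto simp: nth_append\<close>)
  also have "take (n+1) (xs @ [y]) = xs" using n by simp
  also have "(xs @ [y]) ! (n+1) = y" using n by (metis Suc_eq_plus1 nth_append_length)
  finally show ?thesis unfolding path_prob_def using h n by simp
qed

lemma step_nonneg:
  assumes "valid_env w" "\<forall>x\<in>{0..1}. 0 < f x \<and> f x < 1"
  shows "0 \<le> step_prob f w xs y"
proof -
  have "alpha_tilde w xs (last xs) \<in> {0..1}" using alpha_range[OF assms(1)] by auto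
  then have "0 < f (alpha_tilde w xs (last xs))" "f (alpha_tilde w xs (last xs)) < 1" using assms(2) by auto
  then show ?thesis unfolding step_prob_def by (auto simp: Let_def)
qed

lemma step_lb:
  assumes "valid_env w" "\<forall>x\<in>{0..1}. c \<le> f x \<and> c \<le> 1 - f x" "\<bar>y - last xs\<bar> = 1"
  shows "c \<le> step_prob f w xs y"
proof -
  have "alpha_tilde w xs (last xs) \<in> {0..1}" using alpha_range[OF assms(1)] by auto
  then have "c \<le> f (alpha_tilde w xs (last xs))" "c \<le> 1 - f (alpha_tilde w xs (last xs))" using assms(2) by auto
  moreover have "y = last xs + 1 \<or> y = last xs - 1" using assms(3) by linarith
  ultimately show ?thesis unfolding step_prob_def by (auto simp: Let_def)
qed

lemma pp_nonneg:
  assumes "valid_env w" "\<forall>x\<in>{0..1}. 0 < f x \<and> f x < 1"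
  shows "0 \<le> path_prob f w k xs"
  unfolding path_prob_def using step_nonneg[OF assms]
  by (intro mult_nonneg_nonneg prod_nonneg) auto

lemma pp_sum:
  assumes "xs \<noteq> []"
  shows "path_prob f w k (xs @ [last xs + 1]) + path_prob f w k (xs @ [last xs - 1]) = path_prob f w k xs"
  using assms by (simp only: pp_snoc[OF assms] step_up step_dn) (simp add: algebra_simps)

lemma es_pp: "xs \<noteq> [] \<Longrightarrow> es (path_prob f w k) n xs = path_prob f w k xs"
proof (induction n arbitrary: xs)
  case (Suc n)
  then show ?case using pp_sum[of xs] by simp
qed simp

lemma pp_pos:
  assumes "valid_env w" "\<forall>x\<in>{0..1}. 0 < f x \<and> f x < 1"
  shows "xs \<noteq> [] \<Longrightarrow> hd xs = k \<Longrightarrow> (\<forall>i. Suc i < length xs \<longrightarrow> \<bar>xs ! Suc i - xs ! i\<bar> = 1)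
     \<Longrightarrow> 0 < path_prob f w k xs"
proof (induction xs rule: rev_induct)
  case Nil then show ?case by simp
next
  case (snoc y xs)
  show ?case
  proof (cases "xs = []")
    case True
    then show ?thesis using snoc by (simp add: pp_single)
  next
    case False
    have ih: "0 < path_prob f w k xs"
    proof (rule snoc.IH[OF False])
      show "hd xs = k" using snoc.prems False by simp
      show "\<forall>i. Suc i < length xs \<longrightarrow> \<bar>xs ! Suc i - xs ! i\<bar> = 1"
      proof (intro allI impI)
        fix i assume "Suc i < length xs"
        then show "\<bar>xs ! Suc i - xs ! i\<bar> = 1" using snoc.prems(3)[rule_format, of i]
          by (simp add: nth_append)
      qed
    qed
    have "\<bar>(xs @ [y]) ! length xs - (xs @ [y]) ! (length xs - 1)\<bar> = 1"
      using snoc.prems(3)[rule_format, of "length xs - 1"] False by simp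
    then have yl: "\<bar>y - last xs\<bar> = 1" using False by (simp add: nth_append last_conv_nth)
    have al: "alpha_tilde w xs (last xs) \<in> {0..1}" using alpha_range[OF assms(1)] by auto
    have "0 < step_prob f w xs y"
      using yl assms(2) al unfolding step_prob_def by (auto simp: Let_def abs_if split: if_splits)
    then show ?thesis using ih pp_snoc[OF False] by simp
  qed
qed

lemma pp_dn:
  assumes "valid_env w" "\<forall>x\<in>{0..1}. c \<le> f x \<and> c \<le> 1 - f x" "0 \<le> c"
    "\<forall>x\<in>{0..1}. 0 < f x \<and> f x < 1"
  shows "zs \<noteq> [] \<Longrightarrow> c ^ n * path_prob f w k zs \<le> path_prob f w k (dn zs n)"
proof (induction n arbitrary: zs)
  case 0 then show ?case by simp
next
  case (Suc n)
  have s: "path_prob f w k (zs @ [last zs - 1]) = path_prob f w k zs * step_prob f w zs (last zs - 1)"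
    by (rule pp_snoc[OF Suc.prems])
  have lb: "c \<le> step_prob f w zs (last zs - 1)" by (rule step_lb[OF assms(1,2)]) simp
  have nn: "0 \<le> path_prob f w k zs" by (rule pp_nonneg[OF assms(1,4)])
  have "c * path_prob f w k zs \<le> step_prob f w zs (last zs - 1) * path_prob f w k zs"
    by (rule mult_right_mono[OF lb nn])
  also have "\<dots> = path_prob f w k (zs @ [last zs - 1])" unfolding s by (rule mult.commute)
  finally have h: "c * path_prob f w k zs \<le> path_prob f w k (zs @ [last zs - 1])" .
  have cn: "0 \<le> c ^ n" using assms(3) by simp
  have "c ^ Suc n * path_prob f w k zs = c ^ n * (c * path_prob f w k zs)" by simp
  also have "\<dots> \<le> c ^ n * path_prob f w k (zs @ [last zs - 1])"
    by (rule mult_left_mono[OF h cn])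
  also have "\<dots> \<le> path_prob f w k (dn (zs @ [last zs - 1]) n)" using Suc.IH by simp
  finally show ?case by simp
qed

lemma card_shift_eq:
  "card {j. j < length p + m \<and> P j} = card {j. j < m \<and> P (j + length p)}"
  if "\<forall>j<length p. \<not> P j"
proof -
  have "{j. j < length p + m \<and> P j} = (\<lambda>j. j + length p) ` {j. j < m \<and> P (j + length p)}"
  proof (rule set_eqI, rule iffI)
    fix j assume "j \<in> {j. j < length p + m \<and> P j}"
    then have j: "j < length p + m" "P j" by auto
    then have ge: "j \<ge> length p" using that by (meson not_le)
    have e: "j = (j - length p) + length p" using ge by simp
    have "j - length p \<in> {j. j < m \<and> P (j + length p)}" using j ge by simp
    then show "j \<in> (\<lambda>j. j + length p) ` {j. j < m \<and> P (j + length p)}"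
      using e by blast
  next
    fix j assume "j \<in> (\<lambda>j. j + length p) ` {j. j < m \<and> P (j + length p)}"
    then obtain i where "j = i + length p" "i < m" "P (i + length p)" by blast
    then show "j \<in> {j. j < length p + m \<and> P j}" by simp
  qed
  moreover have "inj (\<lambda>j::nat. j + length p)" by (simp add: inj_on_def)
  ultimately show ?thesis by (simp add: card_image inj_on_subset)
qed

lemma loc_time_append:
  assumes "x \<notin> set p" "v \<noteq> []"
  shows "loc_time (p @ v) x = loc_time v x"
proof -
  have l: "length (p @ v) - 1 = length p + (length v - 1)" using assms(2) by (cases v) auto
  have c: "\<forall>j<length p. \<not> (p @ v) ! j = x" using assms(1) by (auto simp: nth_append)
  have "loc_time (p @ v) x = card {j. j < length p + (length v - 1) \<and> (p @ v) ! j = x}"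
    unfolding loc_time_def l ..
  also have "\<dots> = card {j. j < length v - 1 \<and> (p @ v) ! (j + length p) = x}"
    using card_shift_eq[of p "\<lambda>j. (p @ v) ! j = x" "length v - 1"] c by simp
  also have "\<dots> = loc_time v x" unfolding loc_time_def by (simp add: nth_append)
  finally show ?thesis .
qed

lemma right_jumps_append:
  assumes "x \<notin> set p" "v \<noteq> []"
  shows "right_jumps (p @ v) x = right_jumps v x"
proof -
  have l: "length (p @ v) - 1 = length p + (length v - 1)" using assms(2) by (cases v) auto
  have c: "\<forall>j<length p. \<not> ((p @ v) ! j = x \<and> (p @ v) ! (j+1) = x + 1)" using assms(1) by (auto simp: nth_append)
  have "right_jumps (p @ v) x = card {j. j < length p + (length v - 1) \<and> ((p @ v) ! j = x \<and> (p @ v) ! (j+1) = x + 1)}"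
    unfolding right_jumps_def l by simp
  also have "\<dots> = card {j. j < length v - 1 \<and> ((p @ v) ! (j + length p) = x \<and> (p @ v) ! (j + length p + 1) = x + 1)}"
    using card_shift_eq[of p "\<lambda>j. (p @ v) ! j = x \<and> (p @ v) ! (j+1) = x + 1" "length v - 1"] c by simp
  also have "\<dots> = right_jumps v x" unfolding right_jumps_def by (simp add: nth_append)
  finally show ?thesis .
qed

lemma alpha_append:
  assumes "x \<notin> set p" "v \<noteq> []"
  shows "alpha_tilde w (p @ v) x = alpha_tilde w v x"
  unfolding alpha_tilde_def using loc_time_append[OF assms] right_jumps_append[OF assms] by simp

lemma step_append_eq:
  assumes "v \<noteq> []" "\<forall>e\<in>set p. e < last v" "\<forall>e\<in>set q. e < last v"
  shows "step_prob f w (p @ v) y = step_prob f w (q @ v) y"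
proof -
  have "last v \<notin> set p" "last v \<notin> set q" using assms by auto
  then show ?thesis unfolding step_prob_def using assms(1) by (simp add: alpha_append Let_def)
qed


definition ind :: "bool \<Rightarrow> real" where "ind b = (if b then 1 else 0)"

locale gw =
  fixes f :: "real \<Rightarrow> real" and w :: env and k :: int
    and M :: "'a measure" and X :: "nat \<Rightarrow> 'a \<Rightarrow> int"
  assumes fb: "\<forall>x\<in>{0..1}. 0 < f x \<and> f x < 1" and venv: "valid_env w"
    and grrw: "is_grrw f w k M X"
begin

abbreviation pp where "pp \<equiv> path_prob f w k"

sublocale prob_space M using grrw unfolding is_grrw_def by simp

lemma Xm: "X n \<in> measurable M (count_space UNIV)"
  using grrw unfolding is_grrw_def by simp

lemma cyl0: "xs \<noteq> [] \<Longrightarrow> measure M {\<omega> \<in> space M. \<forall>i<length xs. X i \<omega> = xs ! i} = pp xs"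
  using grrw unfolding is_grrw_def by simp

lemma nullI: "A \<in> sets M \<Longrightarrow> measure M A = 0 \<Longrightarrow> A \<in> null_sets M"
  by (simp add: emeasure_eq_measure null_setsI)

definition pth :: "'a \<Rightarrow> nat \<Rightarrow> int list" where
  "pth \<omega> n = map (\<lambda>i. X i \<omega>) [0..<Suc n]"

lemma length_pth[simp]: "length (pth \<omega> n) = Suc n"
  unfolding pth_def by simp

lemma pth_nth: "i \<le> n \<Longrightarrow> pth \<omega> n ! i = X i \<omega>"
  unfolding pth_def by (simp del: upt_Suc add: nth_map_upt)

lemma take_pth: "m \<le> n \<Longrightarrow> take (Suc m) (pth \<omega> n) = pth \<omega> m"
  by (simp add: list_eq_iff_nth_eq pth_nth)

lemma pth_Suc: "pth \<omega> (Suc n) = pth \<omega> n @ [X (Suc n) \<omega>]"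
  unfolding pth_def by simp

lemma pth_eq: "length xs = Suc n \<Longrightarrow> (pth \<omega> n = xs) \<longleftrightarrow> (\<forall>i<length xs. X i \<omega> = xs ! i)"
  by (auto simp: list_eq_iff_nth_eq pth_nth)

lemma Xsets: "{\<omega> \<in> space M. X i \<omega> = v} \<in> sets M"
proof -
  have "X i -` {v} \<inter> space M \<in> sets M" using Xm by (rule measurable_sets) simp
  moreover have "X i -` {v} \<inter> space M = {\<omega> \<in> space M. X i \<omega> = v}" by auto
  ultimately show ?thesis by simp
qed

lemma pth_meas: "(\<lambda>\<omega>. pth \<omega> n) \<in> measurable M (count_space UNIV)"
proof (subst measurable_count_space_eq2_countable, safe)
  fix ys :: "int list"
  show "(\<lambda>\<omega>. pth \<omega> n) -` {ys} \<inter> space M \<in> sets M"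
  proof (cases "length ys = Suc n")
    case True
    have "(\<lambda>\<omega>. pth \<omega> n) -` {ys} \<inter> space M = space M \<inter> (\<Inter>i\<in>{..<Suc n}. {\<omega> \<in> space M. X i \<omega> = ys ! i})"
      using True by (auto simp: pth_eq pth_nth less_Suc_eq_le)
    also have "\<dots> \<in> sets M" using Xsets by auto
    finally show ?thesis .
  next
    case False
    then have "(\<lambda>\<omega>. pth \<omega> n) -` {ys} \<inter> space M = {}" by auto
    then show ?thesis by simp
  qed
qed simp

lemma sQ: "{\<omega> \<in> space M. Q (pth \<omega> n)} \<in> sets M"
proof -
  have "(\<lambda>\<omega>. pth \<omega> n) -` {ys. Q ys} \<inter> space M \<in> sets M"
    using pth_meas by (rule measurable_sets) simp
  moreover have "(\<lambda>\<omega>. pth \<omega> n) -` {ys. Q ys} \<inter> space M = {\<omega> \<in> space M. Q (pth \<omega> n)}" by auto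
  ultimately show ?thesis by simp
qed

lemma cyl: "xs \<noteq> [] \<Longrightarrow> measure M {\<omega> \<in> space M. pth \<omega> (length xs - 1) = xs} = pp xs"
proof -
  assume "xs \<noteq> []"
  then have "{\<omega> \<in> space M. pth \<omega> (length xs - 1) = xs} = {\<omega> \<in> space M. \<forall>i<length xs. X i \<omega> = xs ! i}"
    by (subst pth_eq) auto
  then show ?thesis using cyl0 \<open>xs \<noteq> []\<close> by simp
qed


lemma MEAS:
  "zs \<noteq> [] \<Longrightarrow> (\<forall>ys. Q ys \<longrightarrow> take (length zs) ys = zs) \<Longrightarrow>
   measure M {\<omega> \<in> space M. Q (pth \<omega> (length zs - 1 + n))} = es (\<lambda>ys. pp ys * ind (Q ys)) n zs"
proof (induction n arbitrary: zs Q)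
  case 0
  show ?case
  proof (cases "Q zs")
    case True
    have "{\<omega> \<in> space M. Q (pth \<omega> (length zs - 1 + 0))} = {\<omega> \<in> space M. pth \<omega> (length zs - 1) = zs}"
    proof (intro Collect_cong conj_cong refl iffI)
      fix \<omega> assume q: "Q (pth \<omega> (length zs - 1 + 0))"
      have t: "take (length zs) (pth \<omega> (length zs - 1 + 0)) = zs" using 0(2) q by blast
      have l: "length (pth \<omega> (length zs - 1 + 0)) = length zs" using 0(1) by (cases zs) auto
      from t l show "pth \<omega> (length zs - 1) = zs" by simp
    qed (use True in simp)
    then show ?thesis using cyl[OF 0(1)] True by (simp add: ind_def)
  next
    case False
    have e: "{\<omega> \<in> space M. Q (pth \<omega> (length zs - 1 + 0))} = {}"
    proof (intro equals0I)
      fix \<omega> assume "\<omega> \<in> {\<omega> \<in> space M. Q (pth \<omega> (length zs - 1 + 0))}"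
      then have q: "Q (pth \<omega> (length zs - 1))" by simp
      have t: "take (length zs) (pth \<omega> (length zs - 1)) = zs" using 0(2) q by blast
      have l: "length (pth \<omega> (length zs - 1)) = length zs" using 0(1) by (cases zs) auto
      from t l have "pth \<omega> (length zs - 1) = zs" by simp
      then show False using q False by simp
    qed
    show ?thesis unfolding e using False by (simp add: ind_def)
  qed
next
  case (Suc n)
  define x where "x = last zs"
  define N where "N = length zs - 1 + Suc n"
  define Q1 where "Q1 ys \<longleftrightarrow> Q ys \<and> take (Suc (length zs)) ys = zs @ [x + 1]" for ys
  define Q2 where "Q2 ys \<longleftrightarrow> Q ys \<and> take (Suc (length zs)) ys = zs @ [x - 1]" for ys
  have lz: "length zs \<le> N" using Suc.prems(1) unfolding N_def by (cases zs) auto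
  have N1: "N = length (zs @ [x + 1]) - 1 + n" "N = length (zs @ [x - 1]) - 1 + n"
    unfolding N_def using Suc.prems(1) by (cases zs; simp)+
  have m1: "measure M {\<omega> \<in> space M. Q1 (pth \<omega> N)} = es (\<lambda>ys. pp ys * ind (Q1 ys)) n (zs @ [x + 1])"
    unfolding N1(1) by (rule Suc.IH) (auto simp: Q1_def)
  have m2: "measure M {\<omega> \<in> space M. Q2 (pth \<omega> N)} = es (\<lambda>ys. pp ys * ind (Q2 ys)) n (zs @ [x - 1])"
    unfolding N1(2) by (rule Suc.IH) (auto simp: Q2_def)
  have e1: "es (\<lambda>ys. pp ys * ind (Q1 ys)) n (zs @ [x + 1]) = es (\<lambda>ys. pp ys * ind (Q ys)) n (zs @ [x + 1])"
    by (rule es_cong) (auto simp: Q1_def ext_def)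
  have e2: "es (\<lambda>ys. pp ys * ind (Q2 ys)) n (zs @ [x - 1]) = es (\<lambda>ys. pp ys * ind (Q ys)) n (zs @ [x - 1])"
    by (rule es_cong) (auto simp: Q2_def ext_def)
  define S where "S = {\<omega> \<in> space M. Q (pth \<omega> N)}"
  define S1 where "S1 = {\<omega> \<in> space M. Q1 (pth \<omega> N)}"
  define S2 where "S2 = {\<omega> \<in> space M. Q2 (pth \<omega> N)}"
  define R where "R = {\<omega> \<in> space M. Q (pth \<omega> N) \<and> X (length zs) \<omega> \<noteq> x + 1 \<and> X (length zs) \<omega> \<noteq> x - 1}"
  have tk: "take (Suc (length zs)) (pth \<omega> N) = pth \<omega> (length zs)" for \<omega>
    using lz take_pth by simp
  have pz: "pth \<omega> (length zs) = pth \<omega> (length zs - 1) @ [X (length zs) \<omega>]" for \<omega>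
    using pth_Suc[of \<omega> "length zs - 1"] Suc.prems(1) by (cases zs) auto
  have tk0: "Q (pth \<omega> N) \<Longrightarrow> pth \<omega> (length zs - 1) = zs" for \<omega>
  proof -
    assume "Q (pth \<omega> N)"
    then have "take (length zs) (pth \<omega> N) = zs" using Suc.prems(2) by blast
    moreover have "take (length zs) (pth \<omega> N) = pth \<omega> (length zs - 1)"
      using take_pth[of "length zs - 1" N] lz Suc.prems(1) by (cases zs) auto
    ultimately show ?thesis by simp
  qed
  have SU: "S = (S1 \<union> S2) \<union> R"
  proof (rule set_eqI, rule iffI)
    fix \<omega> assume \<omega>: "\<omega> \<in> S"
    then have q: "Q (pth \<omega> N)" and sp: "\<omega> \<in> space M" unfolding S_def by auto
    have p: "take (Suc (length zs)) (pth \<omega> N) = zs @ [X (length zs) \<omega>]"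
      unfolding tk pz tk0[OF q] ..
    show "\<omega> \<in> (S1 \<union> S2) \<union> R"
    proof (cases "X (length zs) \<omega> = x + 1")
      case True then have "\<omega> \<in> S1" unfolding S1_def Q1_def using q sp p by simp
      then show ?thesis by blast
    next
      case F1: False
      show ?thesis
      proof (cases "X (length zs) \<omega> = x - 1")
        case True then have "\<omega> \<in> S2" unfolding S2_def Q2_def using q sp p by simp
        then show ?thesis by blast
      next
        case False then have "\<omega> \<in> R" unfolding R_def using q sp F1 by simp
        then show ?thesis by blast
      qed
    qed
  next
    fix \<omega> assume "\<omega> \<in> (S1 \<union> S2) \<union> R"
    then show "\<omega> \<in> S" unfolding S_def S1_def S2_def R_def Q1_def Q2_def by blast
  qed
  define Z where "Z = (\<Union>y\<in>{y. y \<noteq> x + 1 \<and> y \<noteq> x - 1}. {\<omega> \<in> space M. pth \<omega> (length zs) = zs @ [y]})"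
  have Znull: "Z \<in> null_sets M"
    unfolding Z_def
  proof (rule null_sets_UN')
    fix y assume y: "y \<in> {y. y \<noteq> x + 1 \<and> y \<noteq> x - 1}"
    have "measure M {\<omega> \<in> space M. pth \<omega> (length zs) = zs @ [y]} = pp (zs @ [y])"
      using cyl[of "zs @ [y]"] by simp
    also have "\<dots> = 0" using y Suc.prems(1) by (simp add: pp_snoc step_other x_def)
    finally show "{\<omega> \<in> space M. pth \<omega> (length zs) = zs @ [y]} \<in> null_sets M"
      using sQ[of "\<lambda>ys. ys = zs @ [y]"] nullI by blast
  qed simp
  have RZ: "R \<subseteq> Z"
  proof
    fix \<omega> assume "\<omega> \<in> R"
    then have q: "Q (pth \<omega> N)" and sp: "\<omega> \<in> space M"
      and ne: "X (length zs) \<omega> \<noteq> x + 1" "X (length zs) \<omega> \<noteq> x - 1" unfolding R_def by auto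
    have "pth \<omega> (length zs) = zs @ [X (length zs) \<omega>]" unfolding pz tk0[OF q] ..
    then have "\<omega> \<in> {\<omega> \<in> space M. pth \<omega> (length zs) = zs @ [X (length zs) \<omega>]}" using sp by simp
    then show "\<omega> \<in> Z" unfolding Z_def using ne by blast
  qed
  have Rnull: "R \<in> null_sets M"
    by (rule null_sets_subset[OF Znull _ RZ]) (unfold R_def, rule sQ[of "\<lambda>ys. Q ys \<and> ys ! length zs \<noteq> x + 1 \<and> ys ! length zs \<noteq> x - 1" N, simplified pth_nth[OF lz]])
  have S1s: "S1 \<in> sets M" "S2 \<in> sets M" unfolding S1_def S2_def by (rule sQ)+
  have dis: "S1 \<inter> S2 = {}" unfolding S1_def S2_def Q1_def Q2_def by auto
  have "measure M S = measure M (S1 \<union> S2)"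
    unfolding SU by (rule measure_Un_null_set) (use S1s Rnull in auto)
  also have "\<dots> = measure M S1 + measure M S2" by (rule finite_measure_Union[OF S1s dis])
  finally have "measure M S = es (\<lambda>ys. pp ys * ind (Q ys)) n (zs @ [x + 1]) + es (\<lambda>ys. pp ys * ind (Q ys)) n (zs @ [x - 1])"
    using m1 m2 e1 e2 unfolding S1_def S2_def by simp
  then show ?case unfolding S_def N_def x_def by simp
qed

lemma MEAS0:
  "measure M {\<omega> \<in> space M. Q (pth \<omega> n)} = es (\<lambda>ys. pp ys * ind (Q ys)) n [k]"
proof -
  define Q' where "Q' ys \<longleftrightarrow> Q ys \<and> take 1 ys = [k]" for ys
  have m: "measure M {\<omega> \<in> space M. Q' (pth \<omega> n)} = es (\<lambda>ys. pp ys * ind (Q' ys)) n [k]"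
    using MEAS[of "[k]" Q' n] by (simp add: Q'_def)
  have e: "es (\<lambda>ys. pp ys * ind (Q' ys)) n [k] = es (\<lambda>ys. pp ys * ind (Q ys)) n [k]"
    by (rule es_cong) (auto simp: Q'_def ext_def)
  define B where "B = space M - {\<omega> \<in> space M. X 0 \<omega> = k}"
  have "measure M {\<omega> \<in> space M. X 0 \<omega> = k} = 1"
    using cyl0[of "[k]"] by (simp add: pp_single)
  then have "measure M B = 0"
    unfolding B_def using prob_compl[OF Xsets[of 0 k]] by simp
  then have Bn: "B \<in> null_sets M" using nullI[of B] Xsets[of 0 k] unfolding B_def by blast
  have t1: "take (Suc 0) (pth \<omega> n) = [X 0 \<omega>]" for \<omega>
    using take_pth[of 0 n \<omega>] by (simp add: pth_def)
  have eqn: "{\<omega> \<in> space M. Q (pth \<omega> n)} = {\<omega> \<in> space M. Q' (pth \<omega> n)} \<union> (B \<inter> {\<omega> \<in> space M. Q (pth \<omega> n)})"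
    by (rule set_eqI) (auto simp: B_def Q'_def t1)
  have Bs: "B \<inter> {\<omega> \<in> space M. Q (pth \<omega> n)} \<in> null_sets M"
    by (rule null_sets_subset[OF Bn]) (use sQ Bn in auto)
  have "measure M {\<omega> \<in> space M. Q (pth \<omega> n)} = measure M ({\<omega> \<in> space M. Q' (pth \<omega> n)} \<union> (B \<inter> {\<omega> \<in> space M. Q (pth \<omega> n)}))"
    by (rule arg_cong[where f="measure M", OF eqn])
  also have "\<dots> = measure M {\<omega> \<in> space M. Q' (pth \<omega> n)}"
    by (rule measure_Un_null_set[OF sQ Bs])
  finally have "measure M {\<omega> \<in> space M. Q (pth \<omega> n)} = measure M {\<omega> \<in> space M. Q' (pth \<omega> n)}" .
  then show ?thesis using m e by simp
qed

end


fun hits :: "int \<Rightarrow> nat \<Rightarrow> int list \<Rightarrow> nat \<Rightarrow> nat \<Rightarrow> bool" where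
  "hits L D ys t0 0 = True"
| "hits L D ys t0 (Suc j) = (\<exists>t. t0 \<le> t \<and> t + D < length ys \<and> ys ! t \<le> L \<and> hits L D ys (t + D) j)"

definition alive :: "int \<Rightarrow> int list \<Rightarrow> nat \<Rightarrow> bool" where
  "alive a ys t0 \<longleftrightarrow> (\<forall>t. t0 \<le> t \<longrightarrow> t < length ys \<longrightarrow> a < ys ! t)"

lemma hits_mono: "hits L D ys t1 j \<Longrightarrow> t0 \<le> t1 \<Longrightarrow> hits L D ys t0 j"
proof (cases j)
  case (Suc j')
  assume h: "hits L D ys t1 j" and le: "t0 \<le> t1"
  then obtain t where "t1 \<le> t" "t + D < length ys" "ys ! t \<le> L" "hits L D ys (t + D) j'"
    using Suc by auto
  then show ?thesis using Suc le by (auto intro!: exI[of _ t])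
qed simp

lemma hits_append: "hits L D ys t0 j \<Longrightarrow> hits L D (ys @ zs) t0 j"
proof (induction j arbitrary: t0)
  case (Suc j)
  then obtain t where t: "t0 \<le> t" "t + D < length ys" "ys ! t \<le> L" "hits L D ys (t + D) j" by auto
  then have "(ys @ zs) ! t \<le> L" by (simp add: nth_append)
  then show ?case using t Suc.IH[of "t + D"] by (auto intro!: exI[of _ t])
qed simp

lemma es_zero: "es (\<lambda>_. 0) n zs = 0"
  by (induction n arbitrary: zs) auto

lemma ext_nth: "ext zs n ys \<Longrightarrow> i < length zs \<Longrightarrow> ys ! i = zs ! i"
  unfolding ext_def by (metis nth_take)

lemma ext_len: "ext zs n ys \<Longrightarrow> length ys = length zs + n"
  unfolding ext_def by simp

lemma alive_split:
  assumes "T \<le> S" "S < length ws" "length ws \<le> length ys" "\<forall>i<length ws. ys ! i = ws ! i"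
  shows "alive a ys T \<longleftrightarrow> alive a ws T \<and> alive a ys S"
proof
  assume h: "alive a ys T"
  show "alive a ws T \<and> alive a ys S"
    unfolding alive_def
  proof (intro conjI allI impI)
    fix t assume "T \<le> t" "t < length ws"
    then show "a < ws ! t" using h assms unfolding alive_def by (metis less_le_trans)
  next
    fix t assume "S \<le> t" "t < length ys"
    then show "a < ys ! t" using h assms unfolding alive_def by (meson le_trans)
  qed
next
  assume h: "alive a ws T \<and> alive a ys S"
  show "alive a ys T" unfolding alive_def
  proof (intro allI impI)
    fix t assume t: "T \<le> t" "t < length ys"
    show "a < ys ! t"
    proof (cases "t < S")
      case True
      then have "t < length ws" using assms(2) by simp
      then show ?thesis using h t assms(4) unfolding alive_def by metis
    next
      case False
      then show ?thesis using h t unfolding alive_def by simp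
    qed
  qed
qed

lemma alive_Suc: "a < ys ! T \<Longrightarrow> alive a ys T \<longleftrightarrow> alive a ys (Suc T)"
  unfolding alive_def by (metis Suc_leD le_antisym not_less_eq_eq)

lemma hits_Suc_skip: "L < ys ! T \<Longrightarrow> hits L D ys T (Suc j) \<longleftrightarrow> hits L D ys (Suc T) (Suc j)"
proof
  assume L: "L < ys ! T" and "hits L D ys T (Suc j)"
  then obtain t where t: "T \<le> t" "t + D < length ys" "ys ! t \<le> L" "hits L D ys (t + D) j" by auto
  then have "t \<noteq> T" using L by auto
  then have "Suc T \<le> t" using t(1) by simp
  then show "hits L D ys (Suc T) (Suc j)" using t by auto
next
  assume "hits L D ys (Suc T) (Suc j)"
  then show "hits L D ys T (Suc j)" by (rule hits_mono) simp
qed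

lemma hits_here:
  assumes "T + D < length ys" "ys ! T \<le> L"
  shows "hits L D ys T (Suc j) \<longleftrightarrow> hits L D ys (T + D) j"
proof
  assume "hits L D ys T (Suc j)"
  then obtain t where t: "T \<le> t" "hits L D ys (t + D) j" by auto
  then show "hits L D ys (T + D) j" by (rule_tac hits_mono) auto
next
  assume "hits L D ys (T + D) j"
  then show "hits L D ys T (Suc j)" using assms by auto
qed

lemma hits_none: "length ys \<le> T + D \<Longrightarrow> \<not> hits L D ys T (Suc j)"
  by auto

context gw
begin

lemma setsX: "{\<omega> \<in> space M. P (X t \<omega>)} \<in> sets M"
proof -
  have "X t -` {v. P v} \<inter> space M \<in> sets M" using Xm by (rule measurable_sets) simp
  moreover have "X t -` {v. P v} \<inter> space M = {\<omega> \<in> space M. P (X t \<omega>)}" by auto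
  ultimately show ?thesis by simp
qed

lemma setsAll: "{\<omega> \<in> space M. \<forall>t. P t (X t \<omega>)} \<in> sets M"
proof -
  have "(\<Inter>t. {\<omega> \<in> space M. P t (X t \<omega>)}) \<in> sets M"
    using setsX by (intro sets.countable_INT) auto
  moreover have "{\<omega> \<in> space M. \<forall>t. P t (X t \<omega>)} = space M \<inter> (\<Inter>t. {\<omega> \<in> space M. P t (X t \<omega>)})"
    by auto
  ultimately show ?thesis by simp
qed

lemma hits_pth_mono: "N1 \<le> N \<Longrightarrow> hits L D (pth \<omega> N1) t0 j \<Longrightarrow> hits L D (pth \<omega> N) t0 j"
proof -
  assume "N1 \<le> N" "hits L D (pth \<omega> N1) t0 j"
  moreover have "pth \<omega> N = pth \<omega> N1 @ drop (Suc N1) (pth \<omega> N)"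
    using take_pth[OF \<open>N1 \<le> N\<close>, of \<omega>] by (metis append_take_drop_id)
  ultimately show ?thesis by (metis hits_append)
qed

lemma hits_exist:
  assumes "\<forall>T. \<exists>t\<ge>T. X t \<omega> \<le> L"
  shows "\<exists>N. hits L D (pth \<omega> N) t0 j"
proof (induction j arbitrary: t0)
  case 0 then show ?case by simp
next
  case (Suc j)
  obtain t where t: "t \<ge> t0" "X t \<omega> \<le> L" using assms by blast
  obtain N1 where N1: "hits L D (pth \<omega> N1) (t + D) j" using Suc.IH by blast
  define N where "N = max N1 (t + D)"
  have "hits L D (pth \<omega> N) (t + D) j" using hits_pth_mono[OF _ N1, of N] N_def by simp
  moreover have "t + D < length (pth \<omega> N)" unfolding N_def by simp
  moreover have "pth \<omega> N ! t \<le> L" using t pth_nth[of t N \<omega>] unfolding N_def by simp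
  ultimately have "hits L D (pth \<omega> N) t0 (Suc j)" using t(1) by auto
  then show ?case by blast
qed

lemma key:
  assumes c0: "0 \<le> c" and cb: "\<forall>x\<in>{0..1}. c \<le> f x \<and> c \<le> 1 - f x"
    and zs: "zs \<noteq> []" and ax: "a < last zs" "last zs \<le> L" and D: "D = nat (L - a)"
  shows "es (\<lambda>ws. pp ws * ind (alive a ws (length zs - 1))) D zs \<le> (1 - c ^ D) * pp zs"
proof -
  define T where "T = length zs - 1"
  have tot: "es (\<lambda>ws. pp ws * ind (alive a ws T)) D zs + es (\<lambda>ws. pp ws * ind (\<not> alive a ws T)) D zs = pp zs"
  proof -
    have "es (\<lambda>ws. pp ws * ind (alive a ws T)) D zs + es (\<lambda>ws. pp ws * ind (\<not> alive a ws T)) D zs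
        = es (\<lambda>ws. pp ws * ind (alive a ws T) + pp ws * ind (\<not> alive a ws T)) D zs"
      by (rule es_add[symmetric])
    also have "\<dots> = es pp D zs" by (rule es_cong[OF zs]) (simp add: ind_def)
    also have "\<dots> = pp zs" by (rule es_pp[OF zs])
    finally show ?thesis .
  qed
  have dl: "length (dn zs D) = length zs + D" "last (dn zs D) = last zs - int D" using dn_props zs by auto
  have na: "\<not> alive a (dn zs D) T"
  proof
    assume "alive a (dn zs D) T"
    moreover have "T \<le> length (dn zs D) - 1" "length (dn zs D) - 1 < length (dn zs D)"
      unfolding T_def using dl zs by (cases zs, auto)+
    ultimately have "a < dn zs D ! (length (dn zs D) - 1)" unfolding alive_def by blast
    moreover have ne: "dn zs D \<noteq> []" using dl(1) zs by auto
    ultimately have "a < last (dn zs D)" by (simp add: last_conv_nth[OF ne])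
    then show False using dl ax D by simp
  qed
  have nn: "0 \<le> pp ws * ind (\<not> alive a ws T)" for ws
    using pp_nonneg[OF venv fb] by (simp add: ind_def)
  have "c ^ D * pp zs \<le> pp (dn zs D)" by (rule pp_dn[OF venv cb c0 fb zs])
  also have "\<dots> = pp (dn zs D) * ind (\<not> alive a (dn zs D) T)" using na by (simp add: ind_def)
  also have "\<dots> \<le> es (\<lambda>ws. pp ws * ind (\<not> alive a ws T)) D zs" by (rule es_ge_dn[OF nn])
  finally have "c ^ D * pp zs \<le> es (\<lambda>ws. pp ws * ind (\<not> alive a ws T)) D zs" .
  then show ?thesis using tot unfolding T_def by (simp add: algebra_simps)
qed


lemma bcF:
  assumes c0: "0 \<le> c" and cb: "\<forall>x\<in>{0..1}. c \<le> f x \<and> c \<le> 1 - f x"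
    and aL: "a < L" and D: "D = nat (L - a)"
  shows "zs \<noteq> [] \<Longrightarrow> length zs \<le> Suc N \<Longrightarrow> length zs - 1 \<le> t0 \<Longrightarrow>
     es (\<lambda>ys. pp ys * ind (alive a ys t0 \<and> hits L D ys t0 j)) (Suc N - length zs) zs
       \<le> (1 - c ^ D) ^ j * pp zs"
proof (induction "Suc N - length zs" arbitrary: zs j t0 rule: less_induct)
  case less
  note IH = less.hyps
  have D1: "1 \<le> D" using aL D by simp
  have c1: "c \<le> 1" using cb by (metis atLeastAtMost_iff le_add_same_cancel1 linorder_linear order_trans zero_le_one diff_add_cancel le_diff_eq one_add_one add_le_cancel_left zero_less_one_class.zero_le_one) 
  have q0: "0 \<le> 1 - c ^ D" using c0 c1 by (simp add: power_le_one)
  have ppz: "0 \<le> pp zs" by (rule pp_nonneg[OF venv fb])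
  have ppnn: "\<And>ys. 0 \<le> pp ys" by (rule pp_nonneg[OF venv fb])
  show ?case
  proof (cases j)
    case 0
    have "es (\<lambda>ys. pp ys * ind (alive a ys t0 \<and> hits L D ys t0 j)) (Suc N - length zs) zs
        \<le> es pp (Suc N - length zs) zs"
      by (rule es_mono[OF less.prems(1)]) (simp add: ind_def ppnn)
    also have "\<dots> = pp zs" by (rule es_pp[OF less.prems(1)])
    finally show ?thesis using 0 by simp
  next
    case (Suc j')
    note jS = Suc
    show ?thesis
    proof (cases "Suc N - length zs")
      case 0
      then have lz: "length zs = Suc N" using less.prems(2) by simp
      have "\<not> hits L D zs t0 (Suc j')" using less.prems(3) lz D1 by auto
      then have i0: "ind (alive a zs t0 \<and> hits L D zs t0 j) = 0" using Suc by (simp add: ind_def)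
      have "es (\<lambda>ys. pp ys * ind (alive a ys t0 \<and> hits L D ys t0 j)) (Suc N - length zs) zs
          = pp zs * ind (alive a zs t0 \<and> hits L D zs t0 j)" using 0 by simp
      also have "\<dots> = 0" using i0 by simp
      finally show ?thesis using ppz q0 by simp
    next
      case (Suc d')
      note dS = Suc
      define x where "x = last zs"
      have lzs: "length zs < Suc N" using dS by simp
      have A: "es (\<lambda>ys. pp ys * ind (alive a ys t1 \<and> hits L D ys t1 j)) (Suc N - length zs) zs
              \<le> (1 - c ^ D) ^ j * pp zs" if t1: "length zs \<le> t1" for t1
      proof -
        have dd: "Suc N - length zs = Suc (Suc N - length (zs @ [y]))" for y using lzs by simp
        have h: "es (\<lambda>ys. pp ys * ind (alive a ys t1 \<and> hits L D ys t1 j)) (Suc N - length (zs @ [y])) (zs @ [y])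
            \<le> (1 - c ^ D) ^ j * pp (zs @ [y])" for y
          by (rule IH) (use lzs t1 in auto)
        have "es (\<lambda>ys. pp ys * ind (alive a ys t1 \<and> hits L D ys t1 j)) (Suc N - length zs) zs
          = es (\<lambda>ys. pp ys * ind (alive a ys t1 \<and> hits L D ys t1 j)) (Suc N - length (zs @ [x + 1])) (zs @ [x + 1])
          + es (\<lambda>ys. pp ys * ind (alive a ys t1 \<and> hits L D ys t1 j)) (Suc N - length (zs @ [x - 1])) (zs @ [x - 1])"
          unfolding dd[of 0] x_def by simp
        also have "\<dots> \<le> (1 - c ^ D) ^ j * pp (zs @ [x + 1]) + (1 - c ^ D) ^ j * pp (zs @ [x - 1])"
          using h[of "x + 1"] h[of "x - 1"] by simp
        also have "\<dots> = (1 - c ^ D) ^ j * pp zs"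
          using pp_sum[OF less.prems(1)] unfolding x_def by (simp add: distrib_left[symmetric])
        finally show ?thesis .
      qed
      show ?thesis
      proof (cases "length zs \<le> t0")
        case True then show ?thesis using A by simp
      next
        case False
        define T where "T = length zs - 1"
        have t0T: "t0 = T" using False less.prems(3) unfolding T_def by simp
        have TL: "T < length zs" unfolding T_def using less.prems(1) by (cases zs) auto
        have lT: "length zs = Suc T" unfolding T_def using less.prems(1) by (cases zs) auto
        have xT: "zs ! T = x" unfolding x_def T_def using less.prems(1) by (simp add: last_conv_nth)
        have ysT: "ys ! T = x" if "ext zs n ys" for n ys using ext_nth[OF that TL] xT by simp
        have ysL: "T < length ys" if "ext zs n ys" for n ys using ext_len[OF that] TL by simp
        consider (low) "x \<le> a" | (high) "L < x" | (mid) "a < x" "x \<le> L" by linarith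
        then show ?thesis
        proof cases
          case low
          have "es (\<lambda>ys. pp ys * ind (alive a ys t0 \<and> hits L D ys t0 j)) (Suc N - length zs) zs
              = es (\<lambda>_. 0) (Suc N - length zs) zs"
          proof (rule es_cong[OF less.prems(1)])
            fix ys assume e: "ext zs (Suc N - length zs) ys"
            have "\<not> alive a ys t0" using ysT[OF e] ysL[OF e] low t0T unfolding alive_def by auto
            then show "pp ys * ind (alive a ys t0 \<and> hits L D ys t0 j) = 0" by (simp add: ind_def)
          qed
          then show ?thesis using es_zero ppz q0 by simp
        next
          case high
          have "es (\<lambda>ys. pp ys * ind (alive a ys t0 \<and> hits L D ys t0 j)) (Suc N - length zs) zs
              = es (\<lambda>ys. pp ys * ind (alive a ys (Suc T) \<and> hits L D ys (Suc T) j)) (Suc N - length zs) zs"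
          proof (rule es_cong[OF less.prems(1)])
            fix ys assume e: "ext zs (Suc N - length zs) ys"
            have "alive a ys T \<longleftrightarrow> alive a ys (Suc T)" using ysT[OF e] high aL by (intro alive_Suc) simp
            moreover have "hits L D ys T (Suc j') \<longleftrightarrow> hits L D ys (Suc T) (Suc j')"
              using ysT[OF e] high by (intro hits_Suc_skip) simp
            ultimately show "pp ys * ind (alive a ys t0 \<and> hits L D ys t0 j)
                = pp ys * ind (alive a ys (Suc T) \<and> hits L D ys (Suc T) j)" using t0T jS by simp
          qed
          also have "\<dots> \<le> (1 - c ^ D) ^ j * pp zs" by (rule A) (simp add: T_def)
          finally show ?thesis .
        next
          case mid
          show ?thesis
          proof (cases "N < T + D")
            case True
            have "es (\<lambda>ys. pp ys * ind (alive a ys t0 \<and> hits L D ys t0 j)) (Suc N - length zs) zs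
                = es (\<lambda>_. 0) (Suc N - length zs) zs"
            proof (rule es_cong[OF less.prems(1)])
              fix ys assume e: "ext zs (Suc N - length zs) ys"
              have "length ys = Suc N" using ext_len[OF e] lzs by simp
              then have "\<not> hits L D ys t0 j" using True t0T jS hits_none[of ys T D L j'] by simp
              then show "pp ys * ind (alive a ys t0 \<and> hits L D ys t0 j) = 0" by (simp add: ind_def)
            qed
            then show ?thesis using es_zero ppz q0 by simp
          next
            case False
            define d2 where "d2 = N - (T + D)"
            have dsplit: "Suc N - length zs = D + d2" unfolding d2_def T_def using False lzs less.prems(1)
              by (cases zs) (auto simp: T_def)
            have inner: "es (\<lambda>ys. pp ys * ind (alive a ys t0 \<and> hits L D ys t0 j)) d2 ws
                \<le> (1 - c ^ D) ^ j' * (pp ws * ind (alive a ws T))" if ew: "ext zs D ws" for ws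
            proof -
              have lws: "length ws = T + D + 1" using ext_len[OF ew] TL unfolding T_def by simp
              have wsne: "ws \<noteq> []" using lws by auto
              have "es (\<lambda>ys. pp ys * ind (alive a ys t0 \<and> hits L D ys t0 j)) d2 ws
                  = es (\<lambda>ys. ind (alive a ws T) * (pp ys * ind (alive a ys (T + D) \<and> hits L D ys (T + D) j'))) d2 ws"
              proof (rule es_cong[OF wsne])
                fix ys assume e: "ext ws d2 ys"
                have lys: "length ys = Suc N" using ext_len[OF e] lws d2_def False by simp
                have eq: "\<forall>i<length ws. ys ! i = ws ! i" using ext_nth[OF e] by blast
                have yT: "ys ! T = x" using eq ysT[OF ew] lws by simp
                have "alive a ys T \<longleftrightarrow> alive a ws T \<and> alive a ys (T + D)"
                  by (rule alive_split) (use lws lys eq False in auto)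
                moreover have "hits L D ys T (Suc j') \<longleftrightarrow> hits L D ys (T + D) j'"
                  by (rule hits_here) (use lys False yT mid in auto)
                ultimately show "pp ys * ind (alive a ys t0 \<and> hits L D ys t0 j)
                    = ind (alive a ws T) * (pp ys * ind (alive a ys (T + D) \<and> hits L D ys (T + D) j'))"
                  using t0T jS by (auto simp: ind_def)
              qed
              also have "\<dots> = ind (alive a ws T) * es (\<lambda>ys. pp ys * ind (alive a ys (T + D) \<and> hits L D ys (T + D) j')) d2 ws"
                by (rule es_cmult)
              also have "\<dots> \<le> ind (alive a ws T) * ((1 - c ^ D) ^ j' * pp ws)"
              proof (rule mult_left_mono)
                have "Suc N - length ws = d2" using lws d2_def by simp
                moreover have "es (\<lambda>ys. pp ys * ind (alive a ys (T + D) \<and> hits L D ys (T + D) j')) (Suc N - length ws) ws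
                    \<le> (1 - c ^ D) ^ j' * pp ws"
                  by (rule IH) (use lws False D1 lzs wsne lT in auto)
                ultimately show "es (\<lambda>ys. pp ys * ind (alive a ys (T + D) \<and> hits L D ys (T + D) j')) d2 ws
                    \<le> (1 - c ^ D) ^ j' * pp ws" by simp
                show "0 \<le> ind (alive a ws T)" by (simp add: ind_def)
              qed
              also have "\<dots> = (1 - c ^ D) ^ j' * (pp ws * ind (alive a ws T))" by (simp add: algebra_simps)
              finally show ?thesis .
            qed
            have "es (\<lambda>ys. pp ys * ind (alive a ys t0 \<and> hits L D ys t0 j)) (Suc N - length zs) zs
                = es (\<lambda>ws. es (\<lambda>ys. pp ys * ind (alive a ys t0 \<and> hits L D ys t0 j)) d2 ws) D zs"
              unfolding dsplit by (rule es_comp)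
            also have "\<dots> \<le> es (\<lambda>ws. (1 - c ^ D) ^ j' * (pp ws * ind (alive a ws T))) D zs"
              by (rule es_mono[OF less.prems(1)]) (rule inner)
            also have "\<dots> = (1 - c ^ D) ^ j' * es (\<lambda>ws. pp ws * ind (alive a ws T)) D zs"
              by (rule es_cmult)
            also have "\<dots> \<le> (1 - c ^ D) ^ j' * ((1 - c ^ D) * pp zs)"
            proof (rule mult_left_mono)
              show "es (\<lambda>ws. pp ws * ind (alive a ws T)) D zs \<le> (1 - c ^ D) * pp zs"
                unfolding T_def by (rule key[OF c0 cb less.prems(1) _ _ D]) (use mid x_def in auto)
              show "0 \<le> (1 - c ^ D) ^ j'" using q0 by simp
            qed
            also have "\<dots> = (1 - c ^ D) ^ j * pp zs" using jS by simp
            finally show ?thesis .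
          qed
        qed
      qed
    qed
  qed
qed


lemma BC:
  assumes c0: "0 < c" and cb: "\<forall>x\<in>{0..1}. c \<le> f x \<and> c \<le> 1 - f x" and aL: "a < L"
  shows "measure M {\<omega> \<in> space M. (\<forall>t\<ge>t0. a < X t \<omega>) \<and> (\<forall>T. \<exists>t\<ge>T. X t \<omega> \<le> L)} = 0"
proof -
  define D where "D = nat (L - a)"
  define q where "q = 1 - c ^ D"
  have c1: "c \<le> 1" using cb by (metis atLeastAtMost_iff le_add_same_cancel1 linorder_linear order_trans zero_le_one diff_add_cancel le_diff_eq one_add_one add_le_cancel_left zero_less_one_class.zero_le_one)
  have q0: "0 \<le> q" unfolding q_def using c0 c1 by (simp add: power_le_one)
  have q1: "q < 1" unfolding q_def using c0 by simp
  define A where "A = {\<omega> \<in> space M. (\<forall>t\<ge>t0. a < X t \<omega>) \<and> (\<forall>T. \<exists>t\<ge>T. X t \<omega> \<le> L)}"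
  define A0 where "A0 = {\<omega> \<in> space M. \<forall>t. t0 \<le> t \<longrightarrow> a < X t \<omega>}"
  have A0s: "A0 \<in> sets M" unfolding A0_def by (rule setsAll)
  define B where "B j N = A0 \<inter> {\<omega> \<in> space M. hits L D (pth \<omega> N) t0 j}" for j N
  have Bs: "B j N \<in> sets M" for j N unfolding B_def using A0s sQ[of "\<lambda>ys. hits L D ys t0 j" N] by (rule sets.Int)
  have Binc: "incseq (B j)" for j
    unfolding incseq_def B_def using hits_pth_mono by blast
  have Bm: "measure M (B j N) \<le> q ^ j" for j N
  proof -
    have "B j N \<subseteq> {\<omega> \<in> space M. alive a (pth \<omega> N) t0 \<and> hits L D (pth \<omega> N) t0 j}"
      unfolding B_def A0_def alive_def by (auto simp: pth_nth)
    then have "measure M (B j N) \<le> measure M {\<omega> \<in> space M. alive a (pth \<omega> N) t0 \<and> hits L D (pth \<omega> N) t0 j}"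
      by (intro finite_measure_mono sQ)
    also have "\<dots> = es (\<lambda>ys. pp ys * ind (alive a ys t0 \<and> hits L D ys t0 j)) N [k]" by (rule MEAS0)
    also have "\<dots> = es (\<lambda>ys. pp ys * ind (alive a ys t0 \<and> hits L D ys t0 j)) (Suc N - length [k]) [k]" by simp
    also have "\<dots> \<le> (1 - c ^ D) ^ j * pp [k]"
      by (rule bcF[OF _ cb aL D_def]) (use c0 in auto)
    finally show ?thesis unfolding q_def by (simp add: pp_single)
  qed
  have Ab: "measure M A \<le> q ^ j" for j
  proof -
    have sub: "A \<subseteq> (\<Union>N. B j N)"
    proof
      fix \<omega> assume "\<omega> \<in> A"
      then have w: "\<omega> \<in> space M" "\<forall>t\<ge>t0. a < X t \<omega>" "\<forall>T. \<exists>t\<ge>T. X t \<omega> \<le> L" unfolding A_def by auto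
      obtain N where "hits L D (pth \<omega> N) t0 j" using hits_exist[OF w(3)] by blast
      then have "\<omega> \<in> B j N" unfolding B_def A0_def using w by auto
      then show "\<omega> \<in> (\<Union>N. B j N)" by blast
    qed
    have Us: "(\<Union>N. B j N) \<in> sets M" using Bs by blast
    have "measure M A \<le> measure M (\<Union>N. B j N)" by (rule finite_measure_mono[OF sub Us])
    also have "\<dots> \<le> q ^ j"
    proof (rule LIMSEQ_le_const2)
      show "(\<lambda>N. measure M (B j N)) \<longlonglongrightarrow> measure M (\<Union>N. B j N)"
        by (rule finite_Lim_measure_incseq) (use Bs Binc in auto)
      show "\<exists>N0. \<forall>N\<ge>N0. measure M (B j N) \<le> q ^ j" using Bm by blast
    qed
    finally show ?thesis .
  qed
  have "(\<lambda>j. q ^ j) \<longlonglongrightarrow> 0" by (rule LIMSEQ_power_zero) (use q0 q1 in simp)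
  then have "measure M A \<le> 0" by (rule LIMSEQ_le_const) (use Ab in blast)
  then show ?thesis unfolding A_def by (simp add: measure_nonneg antisym)
qed

end


lemma set_tail_iff:
  "(\<forall>t. length s \<le> t \<longrightarrow> t < length (s @ r) \<longrightarrow> m < (s @ r) ! t) \<longleftrightarrow> (\<forall>e\<in>set r. m < e)"
proof
  assume h: "\<forall>t. length s \<le> t \<longrightarrow> t < length (s @ r) \<longrightarrow> m < (s @ r) ! t"
  show "\<forall>e\<in>set r. m < e"
  proof
    fix e assume "e \<in> set r"
    then obtain i where i: "i < length r" "r ! i = e" by (auto simp: in_set_conv_nth)
    then show "m < e" using h[rule_format, of "length s + i"] by (simp add: nth_append)
  qed
next
  assume h: "\<forall>e\<in>set r. m < e"
  show "\<forall>t. length s \<le> t \<longrightarrow> t < length (s @ r) \<longrightarrow> m < (s @ r) ! t"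
  proof (intro allI impI)
    fix t assume t: "length s \<le> t" "t < length (s @ r)"
    then have "(s @ r) ! t = r ! (t - length s)" by (simp add: nth_append)
    moreover have "t - length s < length r" using t by simp
    ultimately show "m < (s @ r) ! t" using h by (metis nth_mem)
  qed
qed

lemma pp_identity:
  assumes venv: "valid_env w" and u: "u \<noteq> []"
    and pm: "\<forall>e\<in>set p. e \<le> last u" and qm: "\<forall>e\<in>set q. e \<le> last u"
  shows "r \<noteq> [] \<Longrightarrow> (\<forall>e\<in>set r. last u < e) \<Longrightarrow>
    path_prob f w k2 (q @ u @ r) * path_prob f w k1 (p @ u @ [last u + 1])
    = path_prob f w k1 (p @ u @ r) * path_prob f w k2 (q @ u @ [last u + 1])"
proof (induction r rule: rev_induct)
  case Nil then show ?case by simp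
next
  case (snoc z r)
  show ?case
  proof (cases "r = []")
    case True
    then have z: "last u < z" using snoc.prems by simp
    show ?thesis
    proof (cases "z = last u + 1")
      case True then show ?thesis using \<open>r = []\<close> by simp
    next
      case False
      have l1: "last (p @ u) = last u" "last (q @ u) = last u" using u by simp_all
      have s0: "step_prob f w (p @ u) z = 0" "step_prob f w (q @ u) z = 0"
        using False z l1 by (auto intro!: step_other)
      have "path_prob f w k2 (q @ u @ [z]) = 0" using pp_snoc[of "q @ u" f w k2 z] u s0 by simp
      moreover have "path_prob f w k1 (p @ u @ [z]) = 0" using pp_snoc[of "p @ u" f w k1 z] u s0 by simp
      ultimately show ?thesis using \<open>r = []\<close> by simp
    qed
  next
    case False
    have ih: "path_prob f w k2 (q @ u @ r) * path_prob f w k1 (p @ u @ [last u + 1])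
      = path_prob f w k1 (p @ u @ r) * path_prob f w k2 (q @ u @ [last u + 1])"
      using snoc.IH[OF False] snoc.prems by simp
    have lr: "last (u @ r) = last r" "last r \<in> set r" using False by simp_all
    then have gt: "last u < last (u @ r)" using snoc.prems by simp
    have st: "step_prob f w (p @ (u @ r)) z = step_prob f w (q @ (u @ r)) z"
      by (rule step_append_eq) (use u gt pm qm in fastforce)+
    have e1: "path_prob f w k2 (q @ u @ r @ [z]) = path_prob f w k2 (q @ u @ r) * step_prob f w (q @ (u @ r)) z"
      using pp_snoc[of "q @ u @ r" f w k2 z] u by simp
    have e2: "path_prob f w k1 (p @ u @ r @ [z]) = path_prob f w k1 (p @ u @ r) * step_prob f w (p @ (u @ r)) z"
      using pp_snoc[of "p @ u @ r" f w k1 z] u by simp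
    define S where "S = step_prob f w (q @ (u @ r)) z"
    have "path_prob f w k2 (q @ u @ r) * S * path_prob f w k1 (p @ u @ [last u + 1])
        = (path_prob f w k2 (q @ u @ r) * path_prob f w k1 (p @ u @ [last u + 1])) * S"
      by (simp only: mult.assoc mult.commute mult.left_commute)
    also have "\<dots> = (path_prob f w k1 (p @ u @ r) * path_prob f w k2 (q @ u @ [last u + 1])) * S"
      by (simp only: ih)
    also have "\<dots> = path_prob f w k1 (p @ u @ r) * S * path_prob f w k2 (q @ u @ [last u + 1])"
      by (simp only: mult.assoc mult.commute mult.left_commute)
    finally show ?thesis unfolding append_assoc e1 e2 st S_def .
  qed
qed


context gw
begin

lemma Hchar:
  assumes "length s \<le> Suc Nn" "s \<noteq> []"
  shows "(take (length s) (pth \<omega> Nn) = s \<and> (\<forall>t. length s \<le> t \<longrightarrow> t < length (pth \<omega> Nn) \<longrightarrow> m < pth \<omega> Nn ! t))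
     \<longleftrightarrow> ((\<forall>i<length s. X i \<omega> = s ! i) \<and> (\<forall>t. length s \<le> t \<longrightarrow> t \<le> Nn \<longrightarrow> m < X t \<omega>))"
proof -
  have "take (length s) (pth \<omega> Nn) = pth \<omega> (length s - 1)"
    using take_pth[of "length s - 1" Nn \<omega>] assms by (cases s) auto
  moreover have "pth \<omega> (length s - 1) = s \<longleftrightarrow> (\<forall>i<length s. X i \<omega> = s ! i)"
    using pth_eq[of s "length s - 1" \<omega>] assms(2) by (cases s) auto
  moreover have "(\<forall>t. length s \<le> t \<longrightarrow> t < length (pth \<omega> Nn) \<longrightarrow> m < pth \<omega> Nn ! t)
      \<longleftrightarrow> (\<forall>t. length s \<le> t \<longrightarrow> t \<le> Nn \<longrightarrow> m < X t \<omega>)"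
    by (auto simp: pth_nth less_Suc_eq_le)
  ultimately show ?thesis by simp
qed

lemma Hmeas:
  assumes s: "s \<noteq> []" and m: "last s = m"
  shows "measure M {\<omega> \<in> space M. (\<forall>i<length s. X i \<omega> = s ! i) \<and> (\<forall>t. length s \<le> t \<longrightarrow> t \<le> length s + n \<longrightarrow> m < X t \<omega>)}
    = es (\<lambda>r. pp (s @ r) * ind (\<forall>e\<in>set r. m < e)) n [m + 1]"
proof -
  define Qs where "Qs ys \<longleftrightarrow> take (length s) ys = s \<and> (\<forall>t. length s \<le> t \<longrightarrow> t < length ys \<longrightarrow> m < ys ! t)" for ys
  have ln: "length s - 1 + Suc n = length s + n" using s by (cases s) auto
  have "{\<omega> \<in> space M. (\<forall>i<length s. X i \<omega> = s ! i) \<and> (\<forall>t. length s \<le> t \<longrightarrow> t \<le> length s + n \<longrightarrow> m < X t \<omega>)}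
      = {\<omega> \<in> space M. Qs (pth \<omega> (length s - 1 + Suc n))}"
    unfolding ln Qs_def using Hchar[of s "length s + n"] s by simp
  also have "measure M \<dots> = es (\<lambda>ys. pp ys * ind (Qs ys)) (Suc n) s"
    by (rule MEAS[OF s]) (simp add: Qs_def)
  also have "\<dots> = es (\<lambda>ys. pp ys * ind (Qs ys)) n (s @ [m + 1]) + es (\<lambda>ys. pp ys * ind (Qs ys)) n (s @ [m - 1])"
    using m by simp
  also have "es (\<lambda>ys. pp ys * ind (Qs ys)) n (s @ [m - 1]) = es (\<lambda>_. 0) n (s @ [m - 1])"
  proof (rule es_cong)
    fix ys assume e: "ext (s @ [m - 1]) n ys"
    have "ys ! length s = m - 1" using ext_nth[OF e, of "length s"] by simp
    moreover have "length s < length ys" using ext_len[OF e] by simp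
    ultimately have "\<not> Qs ys" unfolding Qs_def by force
    then show "pp ys * ind (Qs ys) = 0" by (simp add: ind_def)
  qed simp
  also have "es (\<lambda>ys. pp ys * ind (Qs ys)) n (s @ [m + 1]) = es (\<lambda>r. pp (s @ r) * ind (Qs (s @ r))) n [m + 1]"
    by (rule es_append) simp
  also have "\<dots> = es (\<lambda>r. pp (s @ r) * ind (\<forall>e\<in>set r. m < e)) n [m + 1]"
  proof (rule es_cong)
    fix r :: "int list"
    have "Qs (s @ r) \<longleftrightarrow> (\<forall>e\<in>set r. m < e)" unfolding Qs_def using set_tail_iff[of s r m] by simp
    then show "pp (s @ r) * ind (Qs (s @ r)) = pp (s @ r) * ind (\<forall>e\<in>set r. m < e)" by simp
  qed simp
  finally show ?thesis by (simp add: es_zero)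
qed

lemma Hlim:
  "(\<lambda>n. measure M {\<omega> \<in> space M. (\<forall>i<length s. X i \<omega> = s ! i) \<and> (\<forall>t. length s \<le> t \<longrightarrow> t \<le> length s + n \<longrightarrow> m < X t \<omega>)})
    \<longlonglongrightarrow> measure M {\<omega> \<in> space M. (\<forall>i<length s. X i \<omega> = s ! i) \<and> (\<forall>t\<ge>length s. m < X t \<omega>)}"
proof -
  define H where "H n = {\<omega> \<in> space M. (\<forall>i<length s. X i \<omega> = s ! i) \<and> (\<forall>t. length s \<le> t \<longrightarrow> t \<le> length s + n \<longrightarrow> m < X t \<omega>)}" for n
  have Hs: "H n \<in> sets M" for n
  proof -
    have "H n = {\<omega> \<in> space M. \<forall>t. (t < length s \<longrightarrow> X t \<omega> = s ! t) \<and> (length s \<le> t \<longrightarrow> t \<le> length s + n \<longrightarrow> m < X t \<omega>)}"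
      unfolding H_def by auto
    then show ?thesis using setsAll by simp
  qed
  have dec: "decseq H" unfolding decseq_def H_def by auto
  have I: "(\<Inter>n. H n) = {\<omega> \<in> space M. (\<forall>i<length s. X i \<omega> = s ! i) \<and> (\<forall>t\<ge>length s. m < X t \<omega>)}"
  proof (rule set_eqI, rule iffI)
    fix \<omega> assume h: "\<omega> \<in> (\<Inter>n. H n)"
    then have "\<omega> \<in> H 0" by blast
    then have a: "\<omega> \<in> space M" "\<forall>i<length s. X i \<omega> = s ! i" unfolding H_def by auto
    have "m < X t \<omega>" if "t \<ge> length s" for t
      using h that unfolding H_def by (auto dest!: spec[of _ t])
    then show "\<omega> \<in> {\<omega> \<in> space M. (\<forall>i<length s. X i \<omega> = s ! i) \<and> (\<forall>t\<ge>length s. m < X t \<omega>)}"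
      using a by auto
  next
    fix \<omega> assume h: "\<omega> \<in> {\<omega> \<in> space M. (\<forall>i<length s. X i \<omega> = s ! i) \<and> (\<forall>t\<ge>length s. m < X t \<omega>)}"
    show "\<omega> \<in> (\<Inter>n. H n)"
    proof (rule INT_I)
      fix n show "\<omega> \<in> H n" using h unfolding H_def by simp
    qed
  qed
  have "(\<lambda>n. measure M (H n)) \<longlonglongrightarrow> measure M (\<Inter>n. H n)"
    by (rule finite_Lim_measure_decseq) (use Hs dec in auto)
  then show ?thesis unfolding I by (simp only: H_def)
qed

end

lemma transfer:
  assumes GM: "gw f w k1 M X" and GN: "gw f w k2 N Y"
    and u: "u \<noteq> []" and pm: "\<forall>e\<in>set p. e \<le> last u" and qm: "\<forall>e\<in>set q. e \<le> last u"
  shows "measure N {\<omega> \<in> space N. (\<forall>i<length (q @ u). Y i \<omega> = (q @ u) ! i) \<and> (\<forall>t\<ge>length (q @ u). last u < Y t \<omega>)}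
          * path_prob f w k1 (p @ u @ [last u + 1])
       = measure M {\<omega> \<in> space M. (\<forall>i<length (p @ u). X i \<omega> = (p @ u) ! i) \<and> (\<forall>t\<ge>length (p @ u). last u < X t \<omega>)}
          * path_prob f w k2 (q @ u @ [last u + 1])"
proof -
  interpret A: gw f w k1 M X by (rule GM)
  interpret B: gw f w k2 N Y by (rule GN)
  define m where "m = last u"
  define a1 where "a1 = path_prob f w k1 (p @ u @ [m + 1])"
  define a2 where "a2 = path_prob f w k2 (q @ u @ [m + 1])"
  have eqn: "es (\<lambda>r. path_prob f w k2 ((q @ u) @ r) * ind (\<forall>e\<in>set r. m < e)) n [m + 1] * a1
      = es (\<lambda>r. path_prob f w k1 ((p @ u) @ r) * ind (\<forall>e\<in>set r. m < e)) n [m + 1] * a2" for n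
  proof -
    have "es (\<lambda>r. path_prob f w k2 ((q @ u) @ r) * ind (\<forall>e\<in>set r. m < e)) n [m + 1] * a1
        = es (\<lambda>r. a1 * (path_prob f w k2 ((q @ u) @ r) * ind (\<forall>e\<in>set r. m < e))) n [m + 1]"
      by (simp add: es_cmult mult.commute)
    also have "\<dots> = es (\<lambda>r. a2 * (path_prob f w k1 ((p @ u) @ r) * ind (\<forall>e\<in>set r. m < e))) n [m + 1]"
    proof (rule es_cong)
      fix r assume e: "ext [m + 1] n r"
      have rne: "r \<noteq> []" using ext_len[OF e] by auto
      show "a1 * (path_prob f w k2 ((q @ u) @ r) * ind (\<forall>e\<in>set r. m < e))
          = a2 * (path_prob f w k1 ((p @ u) @ r) * ind (\<forall>e\<in>set r. m < e))"
      proof (cases "\<forall>e\<in>set r. m < e")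
        case True
        have "path_prob f w k2 (q @ u @ r) * path_prob f w k1 (p @ u @ [last u + 1])
            = path_prob f w k1 (p @ u @ r) * path_prob f w k2 (q @ u @ [last u + 1])"
          by (rule pp_identity[OF A.venv u pm qm rne]) (use True m_def in simp)
        then show ?thesis using True unfolding a1_def a2_def m_def by (simp add: ind_def mult.commute)
      qed (auto simp: ind_def)
    qed simp
    also have "\<dots> = es (\<lambda>r. path_prob f w k1 ((p @ u) @ r) * ind (\<forall>e\<in>set r. m < e)) n [m + 1] * a2"
      by (simp add: es_cmult mult.commute)
    finally show ?thesis .
  qed
  have lu1: "last (p @ u) = m" "last (q @ u) = m" "p @ u \<noteq> []" "q @ u \<noteq> []" using u m_def by simp_all
  have lim1: "(\<lambda>n. measure N {\<omega> \<in> space N. (\<forall>i<length (q @ u). Y i \<omega> = (q @ u) ! i) \<and> (\<forall>t. length (q @ u) \<le> t \<longrightarrow> t \<le> length (q @ u) + n \<longrightarrow> m < Y t \<omega>)} * a1)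
     \<longlonglongrightarrow> measure N {\<omega> \<in> space N. (\<forall>i<length (q @ u). Y i \<omega> = (q @ u) ! i) \<and> (\<forall>t\<ge>length (q @ u). m < Y t \<omega>)} * a1"
    by (intro tendsto_mult_right B.Hlim)
  have lim2: "(\<lambda>n. measure M {\<omega> \<in> space M. (\<forall>i<length (p @ u). X i \<omega> = (p @ u) ! i) \<and> (\<forall>t. length (p @ u) \<le> t \<longrightarrow> t \<le> length (p @ u) + n \<longrightarrow> m < X t \<omega>)} * a2)
     \<longlonglongrightarrow> measure M {\<omega> \<in> space M. (\<forall>i<length (p @ u). X i \<omega> = (p @ u) ! i) \<and> (\<forall>t\<ge>length (p @ u). m < X t \<omega>)} * a2"
    by (intro tendsto_mult_right A.Hlim)
  have same: "measure N {\<omega> \<in> space N. (\<forall>i<length (q @ u). Y i \<omega> = (q @ u) ! i) \<and> (\<forall>t. length (q @ u) \<le> t \<longrightarrow> t \<le> length (q @ u) + n \<longrightarrow> m < Y t \<omega>)} * a1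
    = measure M {\<omega> \<in> space M. (\<forall>i<length (p @ u). X i \<omega> = (p @ u) ! i) \<and> (\<forall>t. length (p @ u) \<le> t \<longrightarrow> t \<le> length (p @ u) + n \<longrightarrow> m < X t \<omega>)} * a2" for n
    using eqn[of n] B.Hmeas[OF lu1(4,2), of n] A.Hmeas[OF lu1(3,1), of n] by simp
  show ?thesis using LIMSEQ_unique[OF lim1 lim2[folded same]] unfolding a1_def a2_def m_def .
qed


lemma ivt_up:
  fixes x :: "nat \<Rightarrow> int"
  assumes st: "\<forall>i. \<bar>x (Suc i) - x i\<bar> \<le> 1"
  shows "i \<le> j \<Longrightarrow> x i \<le> v \<Longrightarrow> v \<le> x j \<Longrightarrow> \<exists>t. i \<le> t \<and> t \<le> j \<and> x t = v"
proof (induction j)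
  case 0 then show ?case by auto
next
  case (Suc j)
  show ?case
  proof (cases "i = Suc j")
    case True then show ?thesis using Suc.prems by auto
  next
    case False
    then have ij: "i \<le> j" using Suc.prems by simp
    show ?thesis
    proof (cases "v \<le> x j")
      case True
      then obtain t where "i \<le> t" "t \<le> j" "x t = v" using Suc.IH ij Suc.prems by blast
      then show ?thesis by (intro exI[of _ t]) auto
    next
      case False
      then have "v = x (Suc j)" using Suc.prems st[rule_format, of j] by linarith
      then show ?thesis using ij by (intro exI[of _ "Suc j"]) auto
    qed
  qed
qed

lemma DEC:
  fixes x :: "nat \<Rightarrow> int"
  assumes step: "\<forall>i. \<bar>x (Suc i) - x i\<bar> = 1" and x0: "x 0 = 0" and k: "0 \<le> k"
    and lim: "\<forall>Z. \<exists>T. \<forall>t\<ge>T. Z \<le> x t"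
  shows "\<exists>\<tau> \<sigma>. \<tau> \<le> \<sigma> \<and> x \<tau> = k \<and> (\<forall>i. \<tau> < i \<longrightarrow> k < x i) \<and> (\<forall>i\<le>\<tau>. x i \<le> x \<sigma>) \<and> (\<forall>t>\<sigma>. x \<sigma> < x t)"
proof -
  have st: "\<forall>i. \<bar>x (Suc i) - x i\<bar> \<le> 1" using step by simp
  obtain T1 where T1: "\<forall>t\<ge>T1. k + 1 \<le> x t" using lim by blast
  define K where "K = {t. x t = k}"
  have Kfin: "finite K"
  proof (rule finite_subset)
    show "K \<subseteq> {..<T1}" unfolding K_def using T1 by (auto simp: not_less[symmetric])
  qed simp
  have "k \<le> x T1" using T1 by force
  then obtain t1 where t1: "t1 \<le> T1" "x t1 = k" using ivt_up[OF st, of 0 T1 k] x0 k by auto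
  have Kne: "K \<noteq> {}" using t1 unfolding K_def by auto
  define \<tau> where "\<tau> = Max K"
  have \<tau>K: "\<tau> \<in> K" unfolding \<tau>_def using Kfin Kne by simp
  have xt: "x \<tau> = k" using \<tau>K unfolding K_def by simp
  have after: "k < x i" if "\<tau> < i" for i
  proof (rule ccontr)
    assume "\<not> k < x i"
    then have xi: "x i \<le> k" by simp
    define j where "j = max i T1"
    have "k + 1 \<le> x j" using T1 unfolding j_def by simp
    then have "k \<le> x j" by simp
    then obtain t where t: "i \<le> t" "x t = k" using ivt_up[OF st, of i j k] xi unfolding j_def by auto
    then have "t \<in> K" unfolding K_def by simp
    then have "t \<le> \<tau>" unfolding \<tau>_def using Kfin by simp
    then show False using t that by simp
  qed
  define m where "m = Max (x ` {..\<tau>})"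
  have mge: "x i \<le> m" if "i \<le> \<tau>" for i unfolding m_def using that by simp
  have km: "k \<le> m" using mge[of \<tau>] xt by simp
  obtain T2 where T2: "\<forall>t\<ge>T2. m + 1 \<le> x t" using lim by blast
  define S where "S = {t. x t = m}"
  have Sfin: "finite S"
  proof (rule finite_subset)
    show "S \<subseteq> {..<T2}" unfolding S_def using T2 by (auto simp: not_less[symmetric])
  qed simp
  define j2 where "j2 = max \<tau> T2"
  have "m + 1 \<le> x j2" using T2 unfolding j2_def by simp
  then have "m \<le> x j2" by simp
  then obtain t2 where t2: "\<tau> \<le> t2" "x t2 = m" using ivt_up[OF st, of \<tau> j2 m] xt km unfolding j2_def by auto
  define \<sigma> where "\<sigma> = Max S"
  have t2S: "t2 \<in> S" using t2 unfolding S_def by simp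
  have \<sigma>S: "\<sigma> \<in> S" unfolding \<sigma>_def using Sfin t2S by (metis Max_in empty_iff)
  have xs: "x \<sigma> = m" using \<sigma>S unfolding S_def by simp
  have ts: "\<tau> \<le> \<sigma>" using t2 t2S Sfin unfolding \<sigma>_def by (meson Max_ge order_trans)
  have later: "m < x t" if "\<sigma> < t" for t
  proof (rule ccontr)
    assume "\<not> m < x t"
    then have xi: "x t \<le> m" by simp
    define j where "j = max t T2"
    have "m + 1 \<le> x j" using T2 unfolding j_def by simp
    then have "m \<le> x j" by simp
    then obtain t' where t': "t \<le> t'" "x t' = m" using ivt_up[OF st, of t j m] xi unfolding j_def by auto
    then have "t' \<in> S" unfolding S_def by simp
    then have "t' \<le> \<sigma>" unfolding \<sigma>_def using Sfin by simp
    then show False using t' that by simp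
  qed
  show ?thesis
    by (rule exI[of _ \<tau>], rule exI[of _ \<sigma>]) (use ts xt after mge xs later in auto)
qed

lemma exists_c:
  assumes fb: "\<forall>x\<in>{0..1}. 0 < f x \<and> f x < 1" and C3: "C3_on_unit f"
  shows "\<exists>c>0. \<forall>x\<in>{0..1::real}. c \<le> f x \<and> c \<le> 1 - f x"
proof -
  obtain D where D0: "D 0 = f" and d: "\<forall>i<3. \<forall>x\<in>{0..1}. (D i has_real_derivative D (Suc i) x) (at x within {0..1})"
    using C3 unfolding C3_on_unit_def by blast
  have "continuous (at x within {0..1}) f" if "x \<in> {0..1}" for x
    using d[rule_format, of 0 x] that D0 DERIV_continuous by fastforce
  then have cf: "continuous_on {0..1} f" by (simp add: continuous_on_eq_continuous_within)
  have cg: "continuous_on {0..1} (\<lambda>x. min (f x) (1 - f x))"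
    by (intro continuous_on_min continuous_on_diff continuous_on_const cf)
  obtain x0 where x0: "x0 \<in> {0..1::real}" "\<forall>y\<in>{0..1}. min (f x0) (1 - f x0) \<le> min (f y) (1 - f y)"
    using continuous_attains_inf[OF compact_Icc _ cg] by auto
  show ?thesis
    by (rule exI[of _ "min (f x0) (1 - f x0)"]) (use x0 fb in auto)
qed


context gw
begin

lemma setsG: "{\<omega> \<in> space M. (\<forall>i<length s. X i \<omega> = s ! i) \<and> (\<forall>t\<ge>length s. m < X t \<omega>)} \<in> sets M"
proof -
  have e: "{\<omega> \<in> space M. (\<forall>i<length s. X i \<omega> = s ! i) \<and> (\<forall>t\<ge>length s. m < X t \<omega>)}
     = {\<omega> \<in> space M. \<forall>t. (t < length s \<longrightarrow> X t \<omega> = s ! t) \<and> (length s \<le> t \<longrightarrow> m < X t \<omega>)}"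
    by (simp only: all_conj_distrib)
  have b: "{\<omega> \<in> space M. \<forall>t. (t < length s \<longrightarrow> X t \<omega> = s ! t) \<and> (length s \<le> t \<longrightarrow> m < X t \<omega>)} \<in> sets M"
    by (rule setsAll[of "\<lambda>t v. (t < length s \<longrightarrow> v = s ! t) \<and> (length s \<le> t \<longrightarrow> m < v)"])
  show ?thesis unfolding e by (rule b)
qed

lemma setsE: "{\<omega> \<in> space M. \<forall>Z::int. \<exists>T. \<forall>t\<ge>T. Z \<le> X t \<omega>} \<in> sets M"
proof -
  have e: "{\<omega> \<in> space M. \<forall>Z::int. \<exists>T. \<forall>t\<ge>T. Z \<le> X t \<omega>}
     = space M \<inter> (\<Inter>Z::int. \<Union>T::nat. {\<omega> \<in> space M. \<forall>t. T \<le> t \<longrightarrow> Z \<le> X t \<omega>})"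
    by (rule set_eqI) (simp only: mem_Collect_eq Int_iff INT_iff UN_iff iso_tuple_UNIV_I True_implies_equals bex_UNIV ball_UNIV, blast)
  have inner: "{\<omega> \<in> space M. \<forall>t. T \<le> t \<longrightarrow> Z \<le> X t \<omega>} \<in> sets M" for Z :: int and T :: nat
    by (rule setsAll[of "\<lambda>t v. T \<le> t \<longrightarrow> Z \<le> v"])
  have U: "(\<Union>T::nat. {\<omega> \<in> space M. \<forall>t. T \<le> t \<longrightarrow> Z \<le> X t \<omega>}) \<in> sets M" for Z :: int
    by (rule sets.countable_UN, rule image_subsetI, rule inner)
  have I: "(\<Inter>Z::int. \<Union>T::nat. {\<omega> \<in> space M. \<forall>t. T \<le> t \<longrightarrow> Z \<le> X t \<omega>}) \<in> sets M"
    by (rule sets.countable_INT, rule image_subsetI, rule U, rule UNIV_not_empty)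
  show ?thesis unfolding e by (rule sets.Int[OF sets.top I])
qed

lemma setsA: "{\<omega> \<in> space M. (\<forall>t\<ge>t0. a < X t \<omega>) \<and> (\<forall>T. \<exists>t\<ge>T. X t \<omega> \<le> L)} \<in> sets M"
proof -
  have e: "{\<omega> \<in> space M. (\<forall>t\<ge>t0. a < X t \<omega>) \<and> (\<forall>T. \<exists>t\<ge>T. X t \<omega> \<le> L)}
     = {\<omega> \<in> space M. \<forall>t. t0 \<le> t \<longrightarrow> a < X t \<omega>} \<inter>
       (space M \<inter> (\<Inter>T::nat. \<Union>t::nat. {\<omega> \<in> space M. T \<le> t \<and> X t \<omega> \<le> L}))"
    by (rule set_eqI) (simp only: mem_Collect_eq Int_iff INT_iff UN_iff iso_tuple_UNIV_I True_implies_equals bex_UNIV ball_UNIV, blast)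
  have A1: "{\<omega> \<in> space M. \<forall>t. t0 \<le> t \<longrightarrow> a < X t \<omega>} \<in> sets M"
    by (rule setsAll[of "\<lambda>t v. t0 \<le> t \<longrightarrow> a < v"])
  have inner: "{\<omega> \<in> space M. T \<le> t \<and> X t \<omega> \<le> L} \<in> sets M" for T t :: nat
    by (rule setsX[of "\<lambda>v. T \<le> t \<and> v \<le> L"])
  have U: "(\<Union>t::nat. {\<omega> \<in> space M. T \<le> t \<and> X t \<omega> \<le> L}) \<in> sets M" for T :: nat
    by (rule sets.countable_UN, rule image_subsetI, rule inner)
  have I: "(\<Inter>T::nat. \<Union>t::nat. {\<omega> \<in> space M. T \<le> t \<and> X t \<omega> \<le> L}) \<in> sets M"
    by (rule sets.countable_INT, rule image_subsetI, rule U, rule UNIV_not_empty)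
  show ?thesis unfolding e by (rule sets.Int[OF A1 sets.Int[OF sets.top I]])
qed

lemma X0_full: "space M - {\<omega> \<in> space M. X 0 \<omega> = k} \<in> null_sets M"
proof -
  have "measure M {\<omega> \<in> space M. X 0 \<omega> = k} = 1"
    using cyl0[of "[k]"] by (simp add: pp_single)
  then have "measure M (space M - {\<omega> \<in> space M. X 0 \<omega> = k}) = 0"
    using prob_compl[OF Xsets[of 0 k]] by simp
  then show ?thesis using nullI Xsets[of 0 k] by blast
qed

lemma W_full: "space M - {\<omega> \<in> space M. X 0 \<omega> = k \<and> (\<forall>i. \<bar>X (Suc i) \<omega> - X i \<omega>\<bar> = 1)} \<in> null_sets M"
proof -
  have stepnull: "{\<omega> \<in> space M. \<bar>X (Suc i) \<omega> - X i \<omega>\<bar> \<noteq> 1} \<in> null_sets M" for i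
  proof -
    define Q where "Q ys \<longleftrightarrow> \<bar>ys ! Suc i - ys ! i\<bar> \<noteq> 1" for ys :: "int list"
    have eq: "{\<omega> \<in> space M. \<bar>X (Suc i) \<omega> - X i \<omega>\<bar> \<noteq> 1} = {\<omega> \<in> space M. Q (pth \<omega> (Suc i))}"
      unfolding Q_def by (simp add: pth_nth)
    have "measure M {\<omega> \<in> space M. Q (pth \<omega> (Suc i))} = es (\<lambda>ys. pp ys * ind (Q ys)) (Suc i) [k]"
      by (rule MEAS0)
    also have "\<dots> = es (\<lambda>_. 0) (Suc i) [k]"
    proof (rule es_cong)
      fix ys assume e: "ext [k] (Suc i) ys"
      then have "\<not> Q ys" unfolding ext_def Q_def by auto
      then show "pp ys * ind (Q ys) = 0" by (simp add: ind_def)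
    qed simp
    finally have "measure M {\<omega> \<in> space M. Q (pth \<omega> (Suc i))} = 0" by (simp add: es_zero)
    then show ?thesis unfolding eq using nullI sQ by blast
  qed
  have "space M - {\<omega> \<in> space M. X 0 \<omega> = k \<and> (\<forall>i. \<bar>X (Suc i) \<omega> - X i \<omega>\<bar> = 1)}
      = (space M - {\<omega> \<in> space M. X 0 \<omega> = k}) \<union> (\<Union>i. {\<omega> \<in> space M. \<bar>X (Suc i) \<omega> - X i \<omega>\<bar> \<noteq> 1})"
    by auto
  also have "\<dots> \<in> null_sets M"
    using X0_full stepnull by (intro null_sets.Un null_sets_UN) auto
  finally show ?thesis .
qed

end

definition nnp :: "int list \<Rightarrow> bool" where
  "nnp xs \<longleftrightarrow> (\<forall>i. Suc i < length xs \<longrightarrow> \<bar>xs ! Suc i - xs ! i\<bar> = 1)"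

lemma nnp_drop: "nnp xs \<Longrightarrow> nnp (drop t xs)"
  unfolding nnp_def by (auto simp: add.commute[of t] dest: spec[of _ "_ + t"])

lemma nnp_snoc: "nnp xs \<Longrightarrow> xs \<noteq> [] \<Longrightarrow> \<bar>y - last xs\<bar> = 1 \<Longrightarrow> nnp (xs @ [y])"
  unfolding nnp_def
proof (intro allI impI)
  fix i assume h: "\<forall>i. Suc i < length xs \<longrightarrow> \<bar>xs ! Suc i - xs ! i\<bar> = 1" "xs \<noteq> []"
    "\<bar>y - last xs\<bar> = 1" "Suc i < length (xs @ [y])"
  show "\<bar>(xs @ [y]) ! Suc i - (xs @ [y]) ! i\<bar> = 1"
  proof (cases "Suc i < length xs")
    case True then show ?thesis using h(1) by (simp add: nth_append)
  next
    case False
    then have si: "Suc i = length xs" using h(4) by simp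
    then have i: "i = length xs - 1" by simp
    have "(xs @ [y]) ! Suc i = y" using si by (simp add: nth_append)
    moreover have "(xs @ [y]) ! i = last xs" using si i h(2) by (simp add: nth_append last_conv_nth)
    ultimately show ?thesis using h(3) by simp
  qed
qed


theorem lemma2:
  fixes f :: "real \<Rightarrow> real" and w0 :: env and k :: int
    and M :: "'a measure" and X :: "nat \<Rightarrow> 'a \<Rightarrow> int"
    and N :: "'b measure" and Y :: "nat \<Rightarrow> 'b \<Rightarrow> int"
  assumes "\<forall>x\<in>{0..1}. 0 < f x \<and> f x < 1"
    and "C3_on_unit f"
    and "isolated_fixed_points f"
    and "valid_env w0"
    and "k \<ge> 0"
    and "is_grrw f w0 0 M X"
    and "is_grrw f w0 k N Y"
  shows "measure M {\<omega> \<in> space M. filterlim (\<lambda>n. X n \<omega>) at_top sequentially} > 0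
     \<longleftrightarrow> measure N {\<omega> \<in> space N. \<forall>n>0. Y n \<omega> > k} > 0"
proof -
  have gM: "gw f w0 0 M X" unfolding gw_def using assms by auto
  have gN: "gw f w0 k N Y" unfolding gw_def using assms by auto
  interpret A: gw f w0 0 M X by (rule gM)
  interpret B: gw f w0 k N Y by (rule gN)
  have fb: "\<forall>x\<in>{0..1}. 0 < f x \<and> f x < 1" and venv: "valid_env w0" and k0: "0 \<le> k"
    using assms by auto
  obtain c where c0: "0 < c" and cb: "\<forall>x\<in>{0..1}. c \<le> f x \<and> c \<le> 1 - f x"
    using exists_c[OF assms(1,2)] by blast
  have fl: "filterlim (\<lambda>n. X n \<omega>) at_top sequentially \<longleftrightarrow> (\<forall>Z::int. \<exists>T. \<forall>t\<ge>T. Z \<le> X t \<omega>)" for \<omega>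
    by (simp add: filterlim_at_top eventually_sequentially)
  define E where "E = {\<omega> \<in> space M. \<forall>Z::int. \<exists>T. \<forall>t\<ge>T. Z \<le> X t \<omega>}"
  have Eeq: "{\<omega> \<in> space M. filterlim (\<lambda>n. X n \<omega>) at_top sequentially} = E" unfolding E_def fl ..
  have Es: "E \<in> sets M" unfolding E_def by (rule A.setsE)
  define F where "F = {\<omega> \<in> space N. \<forall>n>0. k < Y n \<omega>}"
  have Fs: "F \<in> sets N" unfolding F_def by (rule B.setsAll[of "\<lambda>n v. 0 < n \<longrightarrow> k < v"])
  have Feq: "{\<omega> \<in> space N. \<forall>n>0. Y n \<omega> > k} = F" unfolding F_def ..
  show ?thesis unfolding Eeq Feq
  proof
    assume posE: "0 < measure M E"
    define W where "W = {\<omega> \<in> space M. X 0 \<omega> = 0 \<and> (\<forall>i. \<bar>X (Suc i) \<omega> - X i \<omega>\<bar> = 1)}"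
    have Wn: "space M - W \<in> null_sets M" unfolding W_def by (rule A.W_full)
    define Good where "Good s \<longleftrightarrow> s \<noteq> [] \<and> hd s = 0 \<and> nnp s \<and>
      (\<exists>\<tau><length s. s ! \<tau> = k \<and> (\<forall>i. \<tau> < i \<longrightarrow> i < length s \<longrightarrow> k < s ! i) \<and> (\<forall>i\<le>\<tau>. s ! i \<le> last s))" for s
    define Gs where "Gs s = {\<omega> \<in> space M. (\<forall>i<length s. X i \<omega> = s ! i) \<and> (\<forall>t\<ge>length s. last s < X t \<omega>)}" for s
    have Gss: "Gs s \<in> sets M" for s unfolding Gs_def by (rule A.setsG)
    have "\<exists>s. Good s \<and> 0 < measure M (Gs s)"
    proof (rule ccontr)
      assume nc: "\<not> (\<exists>s. Good s \<and> 0 < measure M (Gs s))"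
      have z: "Gs s \<in> null_sets M" if "Good s" for s
      proof -
        have "\<not> 0 < measure M (Gs s)" using nc that by blast
        then have "measure M (Gs s) = 0" using measure_nonneg[of M "Gs s"] by linarith
        then show ?thesis using A.nullI[OF Gss] by blast
      qed
      have Un: "(\<Union>s\<in>{s. Good s}. Gs s) \<in> null_sets M"
        by (rule null_sets_UN') (use z in auto)
      have sub: "E \<subseteq> (\<Union>s\<in>{s. Good s}. Gs s) \<union> (space M - W)"
      proof
        fix \<omega> assume wE: "\<omega> \<in> E"
        show "\<omega> \<in> (\<Union>s\<in>{s. Good s}. Gs s) \<union> (space M - W)"
        proof (cases "\<omega> \<in> W")
          case False then show ?thesis using wE unfolding E_def by blast
        next
          case True
          then have sp: "\<omega> \<in> space M" and x0: "X 0 \<omega> = 0" and st: "\<forall>i. \<bar>X (Suc i) \<omega> - X i \<omega>\<bar> = 1"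
            unfolding W_def by auto
          have lim: "\<forall>Z. \<exists>T. \<forall>t\<ge>T. Z \<le> X t \<omega>" using wE unfolding E_def by blast
          obtain \<tau> \<sigma> where ts: "\<tau> \<le> \<sigma>" "X \<tau> \<omega> = k" "\<forall>i. \<tau> < i \<longrightarrow> k < X i \<omega>"
              "\<forall>i\<le>\<tau>. X i \<omega> \<le> X \<sigma> \<omega>" "\<forall>t>\<sigma>. X \<sigma> \<omega> < X t \<omega>"
            using DEC[of "\<lambda>i. X i \<omega>" k, OF st x0 k0 lim] by blast
          define s where "s = A.pth \<omega> \<sigma>"
          have ls: "length s = Suc \<sigma>" unfolding s_def by simp
          have sn: "s ! i = X i \<omega>" if "i \<le> \<sigma>" for i unfolding s_def using that by (rule A.pth_nth)
          have sne: "s \<noteq> []" using ls by auto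
          have lasts: "last s = X \<sigma> \<omega>" using sne ls sn[of \<sigma>] by (simp add: last_conv_nth)
          have hs: "hd s = 0" using sne sn[of 0] x0 by (simp add: hd_conv_nth)
          have nn: "nnp s" unfolding nnp_def using ls sn st by auto
          have good: "Good s" unfolding Good_def
          proof (intro conjI sne hs nn exI[of _ \<tau>])
            show "\<tau> < length s" using ts(1) ls by simp
            show "s ! \<tau> = k" using sn[of \<tau>] ts(1,2) by simp
            show "\<forall>i. \<tau> < i \<longrightarrow> i < length s \<longrightarrow> k < s ! i" using sn ts(3) ls by auto
            show "\<forall>i\<le>\<tau>. s ! i \<le> last s" using sn ts(1,4) lasts by auto
          qed
          have "\<omega> \<in> Gs s" unfolding Gs_def using sp sn ls lasts ts(5) by auto
          then show ?thesis using good by blast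
        qed
      qed
      have "E \<in> null_sets M" by (rule null_sets_subset[OF null_sets.Un[OF Un Wn] Es sub])
      then have "measure M E = 0" by (simp add: measure_eq_0_null_sets)
      then show False using posE by simp
    qed
    then obtain s where good: "Good s" and gpos: "0 < measure M (Gs s)" by blast
    obtain \<tau> where tau: "\<tau> < length s" "s ! \<tau> = k" "\<forall>i. \<tau> < i \<longrightarrow> i < length s \<longrightarrow> k < s ! i"
      "\<forall>i\<le>\<tau>. s ! i \<le> last s" using good unfolding Good_def by blast
    have sne: "s \<noteq> []" and hs: "hd s = 0" and nn: "nnp s" using good unfolding Good_def by auto
    define p where "p = take \<tau> s"
    define u where "u = drop \<tau> s"
    have su: "p @ u = s" unfolding p_def u_def by simp
    have une: "u \<noteq> []" unfolding u_def using tau(1) by simp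
    have lu: "last u = last s" unfolding u_def using tau(1) by (simp add: last_drop)
    have hu: "hd u = k" unfolding u_def using tau(1,2) by (simp add: hd_drop_conv_nth)
    have pm: "\<forall>e\<in>set p. e \<le> last u"
    proof
      fix e assume "e \<in> set p"
      then obtain i where "i < length p" "p ! i = e" by (auto simp: in_set_conv_nth)
      then have "i < \<tau>" "s ! i = e" unfolding p_def by auto
      then show "e \<le> last u" using tau(4) lu by auto
    qed
    have tr: "measure N {\<omega> \<in> space N. (\<forall>i<length ([] @ u). Y i \<omega> = ([] @ u) ! i) \<and> (\<forall>t\<ge>length ([] @ u). last u < Y t \<omega>)}
          * path_prob f w0 0 (p @ u @ [last u + 1])
       = measure M {\<omega> \<in> space M. (\<forall>i<length (p @ u). X i \<omega> = (p @ u) ! i) \<and> (\<forall>t\<ge>length (p @ u). last u < X t \<omega>)}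
          * path_prob f w0 k ([] @ u @ [last u + 1])"
      by (rule transfer[OF gM gN une pm]) simp
    have nns: "nnp (s @ [last s + 1])" by (rule nnp_snoc[OF nn sne]) simp
    have a1: "0 < path_prob f w0 0 (p @ u @ [last u + 1])"
    proof -
      have e: "p @ u @ [last u + 1] = s @ [last s + 1]" by (simp only: append_assoc[symmetric] su lu)
      show ?thesis unfolding e
        by (rule pp_pos[OF venv fb]) (use sne hs nns in \<open>auto simp: nnp_def\<close>)
    qed
    have a2: "0 < path_prob f w0 k ([] @ u @ [last u + 1])"
    proof -
      have "u @ [last u + 1] = drop \<tau> (s @ [last s + 1])" unfolding u_def using tau(1) lu u_def by simp
      then have "nnp (u @ [last u + 1])" using nnp_drop[OF nns] by simp
      moreover have "0 < path_prob f w0 k (u @ [last u + 1])"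
        by (rule pp_pos[OF venv fb]) (use une hu calculation in \<open>auto simp: nnp_def\<close>)
      ultimately show ?thesis by simp
    qed
    have Gsu: "{\<omega> \<in> space M. (\<forall>i<length (p @ u). X i \<omega> = (p @ u) ! i) \<and> (\<forall>t\<ge>length (p @ u). last u < X t \<omega>)} = Gs s"
      unfolding Gs_def su lu ..
    define G' where "G' = {\<omega> \<in> space N. (\<forall>i<length ([] @ u). Y i \<omega> = ([] @ u) ! i) \<and> (\<forall>t\<ge>length ([] @ u). last u < Y t \<omega>)}"
    have "0 < measure M (Gs s) * path_prob f w0 k ([] @ u @ [last u + 1])" using gpos a2 by simp
    then have "0 < measure N G' * path_prob f w0 0 (p @ u @ [last u + 1])" using tr Gsu unfolding G'_def by simp
    then have G'pos: "0 < measure N G'" using a1 by (simp add: zero_less_mult_iff)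
    have G'F: "G' \<subseteq> F"
    proof
      fix \<omega> assume "\<omega> \<in> G'"
      then have sp: "\<omega> \<in> space N" and h1: "\<forall>i<length u. Y i \<omega> = u ! i" and h2: "\<forall>t\<ge>length u. last u < Y t \<omega>"
        unfolding G'_def by auto
      have "k < Y n \<omega>" if n: "0 < n" for n
      proof (cases "n < length u")
        case True
        then have "Y n \<omega> = s ! (\<tau> + n)" using h1 unfolding u_def by simp
        moreover have "\<tau> + n < length s" using True unfolding u_def by simp
        ultimately show ?thesis using tau(3) n by simp
      next
        case False
        then have "last u < Y n \<omega>" using h2 by simp
        moreover have "k \<le> last u" using tau(4)[rule_format, of \<tau>] tau(2) lu by simp
        ultimately show ?thesis by simp
      qed
      then show "\<omega> \<in> F" unfolding F_def using sp by simp
    qed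
    have "measure N G' \<le> measure N F" by (rule B.finite_measure_mono[OF G'F Fs])
    then show "0 < measure N F" using G'pos by simp
  next
    assume posF: "0 < measure N F"
    define p where "p = map int [0..<nat k]"
    have pm: "\<forall>e\<in>set p. e \<le> last [k]" unfolding p_def by auto
    define G' where "G' = {\<omega> \<in> space N. (\<forall>i<length ([] @ [k]). Y i \<omega> = ([] @ [k]) ! i) \<and> (\<forall>t\<ge>length ([] @ [k]). last [k] < Y t \<omega>)}"
    define G where "G = {\<omega> \<in> space M. (\<forall>i<length (p @ [k]). X i \<omega> = (p @ [k]) ! i) \<and> (\<forall>t\<ge>length (p @ [k]). last [k] < X t \<omega>)}"
    have tr: "measure N G' * path_prob f w0 0 (p @ [k] @ [last [k] + 1]) = measure M G * path_prob f w0 k ([] @ [k] @ [last [k] + 1])"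
      unfolding G'_def G_def by (rule transfer[OF gM gN _ pm]) simp_all
    have pk: "p @ [k] @ [last [k] + 1] = map int [0..<nat k + 2]" unfolding p_def using k0 by simp
    define q where "q = map int [0..<nat k + 2]"
    have ql: "length q = nat k + 2" unfolding q_def by simp
    have qn: "q ! i = int i" if "i < nat k + 2" for i unfolding q_def using that by (simp del: upt_Suc)
    have qne: "q \<noteq> []" using ql by auto
    have hq: "hd q = 0" using qn[of 0] qne by (simp add: hd_conv_nth)
    have a1: "0 < path_prob f w0 0 (p @ [k] @ [last [k] + 1])"
      unfolding pk q_def[symmetric]
    proof (rule pp_pos[OF venv fb qne hq], intro allI impI)
      fix i assume "Suc i < length q"
      then show "\<bar>q ! Suc i - q ! i\<bar> = 1" using qn[of i] qn[of "Suc i"] ql by simp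
    qed
    have a2: "0 < path_prob f w0 k ([] @ [k] @ [last [k] + 1])"
      by (rule pp_pos[OF venv fb]) (auto simp: nth_Cons')
    have G's: "G' \<in> sets N" unfolding G'_def by (rule B.setsG)
    have FG': "F \<subseteq> G' \<union> (space N - {\<omega> \<in> space N. Y 0 \<omega> = k})"
      unfolding F_def G'_def by auto
    have "measure N F \<le> measure N (G' \<union> (space N - {\<omega> \<in> space N. Y 0 \<omega> = k}))"
      by (rule B.finite_measure_mono[OF FG' sets.Un[OF G's null_setsD2[OF B.X0_full]]])
    also have "\<dots> = measure N G'" by (rule measure_Un_null_set[OF G's B.X0_full])
    finally have "0 < measure N G'" using posF by simp
    then have "0 < measure N G' * path_prob f w0 0 (p @ [k] @ [last [k] + 1])" using a1 by (rule mult_pos_pos)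
    then have "0 < measure M G * path_prob f w0 k ([] @ [k] @ [last [k] + 1])" by (simp only: tr)
    then have Gpos: "0 < measure M G" using a2 by (simp add: zero_less_mult_iff)
    define AL where "AL L = {\<omega> \<in> space M. (\<forall>t\<ge>length (p @ [k]). k < X t \<omega>) \<and> (\<forall>T. \<exists>t\<ge>T. X t \<omega> \<le> L)}" for L
    have ALn: "AL L \<in> null_sets M" if "k < L" for L
    proof -
      have "measure M (AL L) = 0" unfolding AL_def by (rule A.BC[OF c0 cb that])
      then show ?thesis using A.nullI A.setsA unfolding AL_def by blast
    qed
    have cnt: "countable {L::int. k < L}" by (rule countable_subset[of _ UNIV]) auto
    have Un: "(\<Union>L\<in>{L. k < L}. AL L) \<in> null_sets M"
      by (rule null_sets_UN'[OF cnt]) (use ALn in auto)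
    have sub: "G \<subseteq> E \<union> (\<Union>L\<in>{L. k < L}. AL L)"
    proof
      fix \<omega> assume wG: "\<omega> \<in> G"
      then have sp: "\<omega> \<in> space M" and ab: "\<forall>t\<ge>length (p @ [k]). k < X t \<omega>" unfolding G_def by auto
      show "\<omega> \<in> E \<union> (\<Union>L\<in>{L. k < L}. AL L)"
      proof (cases "\<forall>Z::int. \<exists>T. \<forall>t\<ge>T. Z \<le> X t \<omega>")
        case True then show ?thesis using sp unfolding E_def by blast
      next
        case False
        then obtain Z where Z: "\<forall>T. \<exists>t\<ge>T. X t \<omega> < Z" by (auto simp: not_le)
        define L where "L = max Z (k + 1)"
        have "\<forall>T. \<exists>t\<ge>T. X t \<omega> \<le> L" using Z unfolding L_def by (meson less_imp_le max.coboundedI1)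
        then have "\<omega> \<in> AL L" unfolding AL_def using sp ab by blast
        moreover have "k < L" unfolding L_def by simp
        ultimately show ?thesis by blast
      qed
    qed
    have "measure M G \<le> measure M (E \<union> (\<Union>L\<in>{L. k < L}. AL L))"
      by (rule A.finite_measure_mono[OF sub sets.Un[OF Es null_setsD2[OF Un]]])
    also have "\<dots> = measure M E" by (rule measure_Un_null_set[OF Es Un])
    finally show "0 < measure M E" using Gpos by simp
  qed
qed


end
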